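(* Let $|T|$ denote the number of internal vertices of a free marked triangulation $(T,v)$ of an $(m+2)$-gon, distributed according to $\tilde\mu_m$. As $m\to\infty$, the law of $m^{-2}|T|$ converges to the Lévy (completely asymmetric stable of index $1/2$) distribution with density \[ \frac{1}{\sqrt{3\pi}}\,x^{-3/2}e^{-1/(3x)},\qquad x>0 . \] Equivalently, the limit has the law of $\tfrac{2}{3}g^{-2}$, where $g$ is a standard Gaussian, and \[ \lim_{m\to\infty}\tilde\mu_m(|T|>tm^2)=\frac{1}{\sqrt{3\pi}}\int_t^\infty x^{-3/2}e^{-1/(3x)}\,dx \] for every $t>0$.
   Context: $\phi_{n,m}=\frac{2^{n+1}(2m+1)!(2m+3n)!}{m!^2 n!(2m+2n+2)!}$ is the number of rooted type II triangulations (multiple edges allowed, no loops) of a disc with $m+2$ boundary vertices and $n$ internal vertices. Let $\alpha=27/2$. The free marked triangulation of an $(m+2)$-gon is the probability measure $\tilde\mu_m$ on pairs $(T,v)$, where $T$ is such a rooted triangulation and $v$ is an internal vertex of $T$, given by $\tilde\mu_m(T,v)=\alpha^{-|T|}/\tilde Z_m$. Here $|T|$ is the number of internal vertices and $\tilde Z_m=\sum_n n\phi_{n,m}\alpha^{-n}$. *)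

theory Defs
  imports "HOL-Probability.Probability"
begin

text \<open>Number of rooted type II triangulations of an (m+2)-gon with n internal vertices.\<close>
definition phi :: "nat \<Rightarrow> nat \<Rightarrow> real" where
  "phi n m = 2 ^ (n + 1) * fact (2 * m + 1) * fact (2 * m + 3 * n)
             / (fact m ^ 2 * fact n * fact (2 * m + 2 * n + 2))"

definition alpha :: real where "alpha = 27 / 2"

definition Zt :: "nat \<Rightarrow> real" where
  "Zt m = (\<Sum>n. real n * phi n m * alpha powi (- int n))"

text \<open>Law of the number of internal vertices |T| under the free marked triangulation
  measure: each triangulation T with n internal vertices has n choices of marked vertex,
  each of weight alpha^(-n)/Zt m.\<close>
definition size_law :: "nat \<Rightarrow> nat measure" where
  "size_law m = density (count_space UNIV)
     (\<lambda>n. ennreal (real n * phi n m * alpha powi (- int n) / Zt m))"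

definition scaled_size_law :: "nat \<Rightarrow> real measure" where
  "scaled_size_law m = distr (size_law m) borel (\<lambda>n. real n / real m ^ 2)"

definition levy_density :: "real \<Rightarrow> real" where
  "levy_density x = (if x > 0 then 1 / sqrt (3 * pi) * x powr (-3/2) * exp (- 1 / (3 * x)) else 0)"

definition levy_law :: "real measure" where
  "levy_law = density lborel (\<lambda>x. ennreal (levy_density x))"

end

theory Submission
  imports Defs
begin

definition Bf :: "nat \<Rightarrow> real" where
  "Bf n = (4/27)^n * fact (3*n) / (fact n * fact (2*n))"
definition Kf :: "nat \<Rightarrow> real" where
  "Kf m = fact (2*m+1) / fact m ^ 2"
definition Qf :: "nat \<Rightarrow> nat \<Rightarrow> real" where
  "Qf m n = (\<Prod>k=1..2*m. (1 + real k / (3 * real n)) / (1 + real k / (2 * real n)))"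

lemma fact_add_prod: "(fact (a + k) :: real) = fact a * (\<Prod>i=1..k. real (a + i))"
proof (induction k)
  case 0 then show ?case by simp
next
  case (Suc k)
  have "(fact (a + Suc k) :: real) = real (a + Suc k) * fact (a + k)" by simp
  also have "\<dots> = fact a * (\<Prod>i=1..Suc k. real (a + i))"
    using Suc by (simp add: prod.nat_ivl_Suc' algebra_simps)
  finally show ?case .
qed

lemma alpha_powi: "alpha powi (- int n) = (2/27)^n"
  by (simp add: alpha_def power_int_minus power_divide)

lemma aux: fixes P D a b c F f E Q :: real
  assumes "P \<noteq> 0" "D \<noteq> 0" "a \<noteq> 0" "b \<noteq> 0" "c \<noteq> 0"
  shows "2^(n+1)*F*(f*(E*Q*P))/(a^2*b*(c*P*D))*(2/27)^n = 2*((4/27)^n*f/(b*c))*(F/a^2)*E*Q/D"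
proof -
  have e: "(2::real)^(n+1)*(2/27)^n = 2*(4/27)^n"
    by (simp add: power_divide power_mult_distrib[symmetric])
  have "2^(n+1)*F*(f*(E*Q*P))/(a^2*b*(c*P*D))*(2/27)^n = (2^(n+1)*(2/27)^n)*F*f*E*Q/(a^2*b*c*D)"
    using assms by (simp add: field_simps)
  also have "\<dots> = 2*((4/27)^n*f/(b*c))*(F/a^2)*E*Q/D" unfolding e using assms by (simp add: field_simps)
  finally show ?thesis .
qed

lemma phi_decomp:
  assumes n: "n \<ge> 1"
  shows "phi n m * alpha powi (- int n) =
    2 * Bf n * Kf m * (9/4)^m * Qf m n / ((2*real m+2*real n+1) * (2*real m+2*real n+2))"
proof -
  have npos: "real n > 0" using n by simp
  have f1: "(fact (2*m+3*n) :: real) = fact (3*n) * (\<Prod>i=1..2*m. real (3*n + i))"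
    using fact_add_prod[of "3*n" "2*m"] by (simp add: add.commute)
  have f2: "(fact (2*m+2*n+2) :: real) = fact (2*n) * (\<Prod>i=1..2*m. real (2*n + i)) * ((2*real m+2*real n+1) * (2*real m+2*real n+2))"
  proof -
    have e: "2*m+2*n+2 = Suc (Suc (2*n+2*m))" by simp
    have "(fact (2*m+2*n+2) :: real) = fact (2*n+2*m) * ((2*real m+2*real n+1) * (2*real m+2*real n+2))"
      unfolding e fact_Suc by (simp add: algebra_simps)
    then show ?thesis using fact_add_prod[of "2*n" "2*m"] by simp
  qed
  have pr: "(\<Prod>i=1..2*m. real (3*n + i)) = (9/4)^m * Qf m n * (\<Prod>i=1..2*m. real (2*n + i))"
  proof -
    have "\<And>i. real (3*n+i) = 3/2 * ((1 + real i / (3 * real n)) / (1 + real i / (2 * real n))) * real (2*n+i)"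
    proof -
      fix i
      have d: "(1 + real i / (3 * real n)) / (1 + real i / (2 * real n)) = (2*(3*real n+real i))/(3*(2*real n+real i))"
      proof -
        have a: "1 + real i / (3 * real n) = (3*real n+real i)/(3*real n)" using npos by (simp add: field_simps)
        have b: "1 + real i / (2 * real n) = (2*real n+real i)/(2*real n)" using npos by (simp add: field_simps)
        have p: "2*real n+real i > 0" using npos by simp
        have q: "real i * (real n * 3) + real n * (real n * 6) \<noteq> 0" 
        proof -
          have "real i * (real n * 3) + real n * (real n * 6) = 3*real n*(2*real n+real i)" by (simp add: algebra_simps)
          also have "\<dots> > 0" using npos p by simp
          finally show ?thesis by simp
        qed
        show ?thesis unfolding a b using npos p q by (simp add: field_simps)
      qed
      show "real (3*n+i) = 3/2 * ((1 + real i / (3 * real n)) / (1 + real i / (2 * real n))) * real (2*n+i)"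
      proof -
        have p: "2*real n+real i > 0" using npos by simp
        show ?thesis unfolding d using p by (simp add: field_simps)
      qed
    qed
    then have "(\<Prod>i=1..2*m. real (3*n + i)) = (\<Prod>i=1..2*m. 3/2 * ((1 + real i / (3 * real n)) / (1 + real i / (2 * real n))) * real (2*n+i))"
      by simp
    also have "\<dots> = (3/2)^(2*m) * Qf m n * (\<Prod>i=1..2*m. real (2*n + i))"
      by (simp only: prod.distrib Qf_def prod_constant card_atLeastAtMost) simp
    also have "(3/2::real)^(2*m) = (9/4)^m" by (simp add: power_mult power2_eq_square)
    finally show ?thesis .
  qed
  have pos2: "(\<Prod>i=1..2*m. real (2*n + i)) > 0" by (intro prod_pos) auto
  have "phi n m * alpha powi (- int n) = 2^(n+1) * fact (2*m+1) * fact (2*m+3*n)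
             / (fact m ^ 2 * fact n * fact (2*m+2*n+2)) * (2/27)^n"
    by (simp add: phi_def alpha_powi)
  also have "\<dots> = 2 * ((4/27)^n * fact (3*n) / (fact n * fact (2*n))) * (fact (2*m+1) / fact m ^ 2) * (9/4)^m * Qf m n / ((2*real m+2*real n+1) * (2*real m+2*real n+2))"
    unfolding f1 f2 pr
  proof (rule aux)
    show "(\<Prod>i=1..2*m. real (2*n + i)) \<noteq> 0" using pos2 by simp
    show "(2*real m+2*real n+1) * (2*real m+2*real n+2) \<noteq> 0" by (simp add: add_pos_pos)
  qed auto
  finally show ?thesis by (simp add: Bf_def Kf_def)
qed


lemma Bf_pos: "Bf n > 0"
  by (simp add: Bf_def)

lemma Bf_Suc: "Bf (Suc n) = Bf n * (2*(3*real n+1)*(3*real n+2)) / (9*(real n+1)*(2*real n+1))"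
proof -
  have e1: "3 * Suc n = Suc (Suc (Suc (3*n)))" by simp
  have e2: "2 * Suc n = Suc (Suc (2*n))" by simp
  have "Bf (Suc n) = (4/27)^(Suc n) * ((3*real n+3)*(3*real n+2)*(3*real n+1)*fact (3*n))
        / ((real n+1) * fact n * ((2*real n+2)*(2*real n+1)*fact (2*n)))"
    unfolding Bf_def e1 e2 fact_Suc by (simp add: algebra_simps)
  also have "\<dots> = Bf n * ((4/27) * ((3*real n+3)*(3*real n+2)*(3*real n+1)) / ((real n+1) * ((2*real n+2)*(2*real n+1))))"
    unfolding Bf_def by (simp add: field_simps)
  also have "(4/27) * ((3*real n+3)*(3*real n+2)*(3*real n+1)) / ((real n+1) * ((2*real n+2)*(2*real n+1)))
     = (2*(3*real n+1)*(3*real n+2)) / (9*(real n+1)*(2*real n+1))"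
  proof -
    have p: "real n + 1 > 0" "2*real n+1 > 0" by auto
    have q: "(real n+1) * ((2*real n+2)*(2*real n+1)) \<noteq> 0" "9*(real n+1)*(2*real n+1) \<noteq> 0" using p by auto
    show ?thesis unfolding frac_eq_eq[OF q] by (simp add: algebra_simps)
  qed
  finally show ?thesis by simp
qed

lemma poly1: fixes x :: real assumes "x \<ge> 0"
  shows "x * (9*(x+1)*(2*x+1))^2 \<le> (x+1) * (2*(3*x+1)*(3*x+2))^2"
proof -
  have "(x+1) * (2*(3*x+1)*(3*x+2))^2 - x * (9*(x+1)*(2*x+1))^2 = (x+1)*(63*x^2+63*x+16)"
    by (simp add: algebra_simps power2_eq_square)
  also have "\<dots> \<ge> 0" using assms by simp
  finally show ?thesis by simp
qed

lemma poly2: fixes x :: real assumes "x \<ge> 0"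
  shows "(x+2) * (2*(3*x+1)*(3*x+2))^2 \<le> (x+1) * (9*(x+1)*(2*x+1))^2"
proof -
  have "(x+1) * (9*(x+1)*(2*x+1))^2 - (x+2) * (2*(3*x+1)*(3*x+2))^2 = 261*x^3+459*x^2+263*x+49"
    by (simp add: algebra_simps power2_eq_square power3_eq_cube)
  also have "\<dots> \<ge> 0" using assms by simp
  finally show ?thesis by simp
qed

lemma Bsq_inc: "real n * Bf n ^ 2 \<le> real (Suc n) * Bf (Suc n) ^ 2"
proof -
  define x where "x = real n"
  have x: "x \<ge> 0" by (simp add: x_def)
  have D: "9*(x+1)*(2*x+1) > 0" using x by simp
  have sq: "Bf (Suc n) ^ 2 = Bf n ^ 2 * (2*(3*x+1)*(3*x+2))^2 / (9*(x+1)*(2*x+1))^2"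
    unfolding Bf_Suc x_def by (simp only: power_divide power_mult_distrib)
  have "real (Suc n) * Bf (Suc n) ^ 2 = Bf n ^ 2 * ((x+1) * (2*(3*x+1)*(3*x+2))^2) / (9*(x+1)*(2*x+1))^2"
    unfolding sq by (simp add: x_def mult_ac)
  also have "\<dots> \<ge> Bf n ^ 2 * (x * (9*(x+1)*(2*x+1))^2) / (9*(x+1)*(2*x+1))^2"
    using poly1[OF x] by (intro divide_right_mono mult_left_mono) auto
  also have "Bf n ^ 2 * (x * (9*(x+1)*(2*x+1))^2) / (9*(x+1)*(2*x+1))^2 = x * Bf n ^ 2"
  proof -
    have Dn: "(9*(x+1)*(2*x+1))^2 \<noteq> 0" using x by simp
    show ?thesis using Dn by (simp add: field_simps)
  qed
  finally show ?thesis by (simp add: x_def)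
qed

lemma Bsq_dec: "real (Suc n + 1) * Bf (Suc n) ^ 2 \<le> real (n + 1) * Bf n ^ 2"
proof -
  define x where "x = real n"
  have x: "x \<ge> 0" by (simp add: x_def)
  have D: "9*(x+1)*(2*x+1) > 0" using x by simp
  have sq: "Bf (Suc n) ^ 2 = Bf n ^ 2 * (2*(3*x+1)*(3*x+2))^2 / (9*(x+1)*(2*x+1))^2"
    unfolding Bf_Suc x_def by (simp only: power_divide power_mult_distrib)
  have "real (Suc n + 1) * Bf (Suc n) ^ 2 = Bf n ^ 2 * ((x+2) * (2*(3*x+1)*(3*x+2))^2) / (9*(x+1)*(2*x+1))^2"
    unfolding sq by (simp add: x_def mult_ac)
  also have "\<dots> \<le> Bf n ^ 2 * ((x+1) * (9*(x+1)*(2*x+1))^2) / (9*(x+1)*(2*x+1))^2"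
    using poly2[OF x] by (intro divide_right_mono mult_left_mono) auto
  also have "\<dots> = (x+1) * Bf n ^ 2"
  proof -
    have Dn: "(9*(x+1)*(2*x+1))^2 \<noteq> 0" using x by simp
    show ?thesis using Dn by (simp add: field_simps)
  qed
  finally show ?thesis by (simp add: x_def add_ac)
qed

lemma Bsq_le1: "real (n + 1) * Bf n ^ 2 \<le> 1"
proof (induction n)
  case 0 then show ?case by (simp add: Bf_def)
next
  case (Suc n) then show ?case using Bsq_dec[of n] by linarith
qed

definition bseq :: "nat \<Rightarrow> real" where "bseq n = sqrt (real n) * Bf n"

lemma bseq_nonneg: "bseq n \<ge> 0"
  using Bf_pos[of n] by (simp add: bseq_def)

lemma bseq_inc: "incseq bseq"
proof (rule incseq_SucI)
  fix n
  have "bseq n ^ 2 \<le> bseq (Suc n) ^ 2"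
    using Bsq_inc[of n] by (simp add: bseq_def power_mult_distrib)
  then show "bseq n \<le> bseq (Suc n)"
    using bseq_nonneg[of n] bseq_nonneg[of "Suc n"] power2_le_imp_le by blast
qed

lemma bseq_le1: "bseq n \<le> 1"
proof -
  have "bseq n ^ 2 \<le> 1"
    using Bsq_le1[of n] Bf_pos[of n] by (simp add: bseq_def power_mult_distrib)
      (smt (verit) mult_right_mono zero_le_power2)
  then show ?thesis using bseq_nonneg[of n] by (simp add: power_le_one_iff abs_le_iff)
qed

definition beta :: real where "beta = (SUP n. bseq n)"

lemma bseq_lim: "bseq \<longlonglongrightarrow> beta"
  unfolding beta_def
  by (rule LIMSEQ_incseq_SUP[OF _ bseq_inc]) (auto intro: bdd_aboveI2[where M=1] bseq_le1)

lemma bseq_le_beta: "bseq n \<le> beta"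
  using incseq_le[OF bseq_inc bseq_lim] by simp

lemma beta_pos: "beta > 0"
proof -
  have "bseq 1 > 0" by (simp add: bseq_def Bf_pos)
  then show ?thesis using bseq_le_beta[of 1] by simp
qed


lemma sum_real_Icc: "(\<Sum>k=1..N. real k) = real N * (real N + 1) / 2"
  by (induction N) (simp_all add: field_simps)

lemma Qf_factor:
  assumes "n \<ge> 1"
  shows "(1 + real k / (3 * real n)) / (1 + real k / (2 * real n)) = 1 - real k / (6 * real n + 3 * real k)"
proof -
  have p: "real n > 0" using assms by simp
  have a: "1 + real k / (3 * real n) = (3*real n+real k)/(3*real n)" using p by (simp add: field_simps)
  have b: "1 + real k / (2 * real n) = (2*real n+real k)/(2*real n)" using p by (simp add: field_simps)
  have c: "1 - real k / (6 * real n + 3 * real k) = (6*real n + 2*real k) / (6 * real n + 3 * real k)"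
    using p by (simp add: field_simps)
  have q: "(3*real n) * (2*real n+real k) \<noteq> 0" "6 * real n + 3 * real k \<noteq> 0" using p by auto
  show ?thesis unfolding a b c divide_divide_times_eq frac_eq_eq[OF q] by (simp add: algebra_simps)
qed

lemma Qf_alt: "n \<ge> 1 \<Longrightarrow> Qf m n = (\<Prod>k=1..2*m. 1 - real k / (6 * real n + 3 * real k))"
  unfolding Qf_def by (intro prod.cong refl Qf_factor)

lemma Qf_pos: "n \<ge> 1 \<Longrightarrow> Qf m n > 0"
  unfolding Qf_alt by (intro prod_pos) (auto simp: field_simps)

lemma Qf_upper:
  assumes "n \<ge> 1"
  shows "Qf m n \<le> exp (- (real m * (2 * real m + 1)) / (6 * (real n + real m)))"
proof -
  have "Qf m n \<le> (\<Prod>k=1..2*m. exp (- real k / (6 * (real n + real m))))"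
    unfolding Qf_alt[OF assms]
  proof (rule prod_mono, safe)
    fix k assume k: "k \<in> {1..2*m}"
    have p: "real n > 0" using assms by simp
    show "0 \<le> 1 - real k / (6 * real n + 3 * real k)" using p by (simp add: field_simps)
    have "1 - real k / (6 * real n + 3 * real k) \<le> exp (- (real k / (6 * real n + 3 * real k)))"
      using exp_ge_add_one_self[of "- (real k / (6 * real n + 3 * real k))"] by simp
    also have "\<dots> \<le> exp (- real k / (6 * (real n + real m)))"
    proof -
      have "real k \<le> 2 * real m" using k by simp
      then have "real k / (6 * (real n + real m)) \<le> real k / (6 * real n + 3 * real k)"
        using p by (intro divide_left_mono) auto
      then show ?thesis by simp
    qed
    finally show "1 - real k / (6 * real n + 3 * real k) \<le> exp (- real k / (6 * (real n + real m)))" .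
  qed
  also have "\<dots> = exp (\<Sum>k=1..2*m. - real k / (6 * (real n + real m)))"
    by (simp add: exp_sum)
  also have "(\<Sum>k=1..2*m. - real k / (6 * (real n + real m))) = - (\<Sum>k=1..2*m. real k) / (6 * (real n + real m))"
    by (simp add: sum_divide_distrib sum_negf)
  also have "\<dots> = - (real m * (2 * real m + 1)) / (6 * (real n + real m))"
    unfolding sum_real_Icc by simp
  finally show ?thesis .
qed

lemma one_minus_ge_exp:
  fixes z :: real assumes "0 \<le> z" "z \<le> 1/2"
  shows "exp (- (z + 2 * z^2)) \<le> 1 - z"
proof -
  have "1 + (z + 2*z^2) \<le> exp (z + 2*z^2)" by (rule exp_ge_add_one_self)
  moreover have "1 \<le> (1 - z) * (1 + (z + 2*z^2))"
  proof -
    have "(1 - z) * (1 + (z + 2*z^2)) = 1 + z^2 * (1 - 2*z)" by (simp add: algebra_simps power2_eq_square)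
    moreover have "z^2 * (1 - 2*z) \<ge> 0" using assms by simp
    ultimately show ?thesis by simp
  qed
  ultimately have "1 \<le> (1 - z) * exp (z + 2*z^2)"
    using assms order_trans[OF _ mult_left_mono[of "1 + (z + 2*z^2)" "exp (z + 2*z^2)" "1 - z"]] by simp
  then have "1 / exp (z + 2*z^2) \<le> 1 - z"
    by (subst divide_le_eq) (simp add: mult.commute)
  moreover have "exp (- (z + 2*z^2)) = 1 / exp (z + 2*z^2)" by (subst exp_minus) (simp add: inverse_eq_divide)
  ultimately show ?thesis by simp
qed

lemma Qf_lower:
  assumes "n \<ge> 1"
  shows "exp (- (real m * (2 * real m + 1)) / (6 * real n) - 4 * real m ^ 3 / (9 * real n ^ 2)) \<le> Qf m n"
proof -
  have p: "real n > 0" using assms by simp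
  have "(\<Prod>k=1..2*m. exp (- real k / (6 * real n) - 2 * real m ^ 2 / (9 * real n ^ 2))) \<le> Qf m n"
    unfolding Qf_alt[OF assms]
  proof (rule prod_mono, safe)
    fix k assume k: "k \<in> {1..2*m}"
    define z where "z = real k / (6 * real n + 3 * real k)"
    have z0: "0 \<le> z" using p by (simp add: z_def)
    have zk: "z \<le> real k / (6 * real n)" unfolding z_def using p k by (intro divide_left_mono) auto
    have z2: "z \<le> 1/2" unfolding z_def using p by (simp add: field_simps)
    show "0 \<le> exp (- real k / (6 * real n) - 2 * real m ^ 2 / (9 * real n ^ 2))" by simp
    have "z^2 \<le> (real k / (6 * real n))^2" using z0 zk by (intro power_mono) auto
    also have "\<dots> \<le> (2 * real m / (6 * real n))^2"
      using k p by (intro power_mono divide_right_mono) auto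
    also have "\<dots> = real m ^ 2 / (9 * real n ^ 2)" by (simp add: power_divide power_mult_distrib)
    finally have "z + 2 * z^2 \<le> real k / (6 * real n) + 2 * real m ^ 2 / (9 * real n ^ 2)"
      using zk by simp
    then have "exp (- real k / (6 * real n) - 2 * real m ^ 2 / (9 * real n ^ 2)) \<le> exp (- (z + 2 * z^2))"
      by simp
    also have "\<dots> \<le> 1 - z" by (rule one_minus_ge_exp[OF z0 z2])
    finally show "exp (- real k / (6 * real n) - 2 * real m ^ 2 / (9 * real n ^ 2)) \<le> 1 - real k / (6 * real n + 3 * real k)"
      by (simp add: z_def)
  qed
  moreover have "(\<Prod>k=1..2*m. exp (- real k / (6 * real n) - 2 * real m ^ 2 / (9 * real n ^ 2)))
     = exp (- (real m * (2 * real m + 1)) / (6 * real n) - 4 * real m ^ 3 / (9 * real n ^ 2))"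
  proof -
    have "(\<Prod>k=1..2*m. exp (- real k / (6 * real n) - 2 * real m ^ 2 / (9 * real n ^ 2)))
       = exp (\<Sum>k=1..2*m. - real k / (6 * real n) - 2 * real m ^ 2 / (9 * real n ^ 2))"
      by (simp add: exp_sum)
    also have "(\<Sum>k=1..2*m. - real k / (6 * real n) - 2 * real m ^ 2 / (9 * real n ^ 2))
       = - (\<Sum>k=1..2*m. real k) / (6 * real n) - real (2*m) * (2 * real m ^ 2 / (9 * real n ^ 2))"
      by (simp add: sum_subtractf sum_divide_distrib sum_negf)
    also have "\<dots> = - (real m * (2 * real m + 1)) / (6 * real n) - 4 * real m ^ 3 / (9 * real n ^ 2)"
      unfolding sum_real_Icc by (simp add: power3_eq_cube power2_eq_square)
    finally show ?thesis by simp
  qed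
  ultimately show ?thesis by simp
qed


lemma staircase:
  fixes a :: "nat \<Rightarrow> real" and c :: real
  assumes c: "c > 0" and a: "\<And>n. a n \<ge> 0"
  shows "(\<integral>\<^sup>+y. ennreal (c * a (nat \<lceil>c*y\<rceil>) * indicator {0<..} y) \<partial>lborel) = (\<Sum>n. ennreal (a (Suc n)))"
proof -
  have pw: "ennreal (c * a (nat \<lceil>c*y\<rceil>) * indicator {0<..} y) =
     (\<Sum>n. ennreal (c * a (Suc n)) * indicator {real n / c <.. real (Suc n) / c} y)" for y
  proof (cases "y > 0")
    case False
    have "\<And>n. indicator {real n / c <.. real (Suc n) / c} y = (0::ennreal)"
    proof -
      fix n
      have "real n / c \<ge> 0" using c by simp
      then show "indicator {real n / c <.. real (Suc n) / c} y = (0::ennreal)" using False by (simp add: indicator_def)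
    qed
    then show ?thesis using False by simp
  next
    case True
    define k where "k = nat \<lceil>c*y\<rceil>"
    have cy: "c*y > 0" using c True by simp
    have k1: "k \<ge> 1" unfolding k_def using cy by linarith
    have ind: "indicator {real n / c <.. real (Suc n) / c} y = (if n = k - 1 then 1 else (0::ennreal))" for n
    proof -
      have "y \<in> {real n / c <.. real (Suc n) / c} \<longleftrightarrow> real n < c*y \<and> c*y \<le> real n + 1"
        using c by (simp add: field_simps)
      also have "\<dots> \<longleftrightarrow> \<lceil>c*y\<rceil> = int n + 1"
        by (simp add: ceiling_eq_iff)
      also have "\<dots> \<longleftrightarrow> n = k - 1" unfolding k_def using cy k1 k_def by linarith
      finally show ?thesis by (simp add: indicator_def)
    qed
    have "(\<Sum>n. ennreal (c * a (Suc n)) * indicator {real n / c <.. real (Suc n) / c} y)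
        = (\<Sum>n. if n = k - 1 then ennreal (c * a (Suc n)) else 0)"
      unfolding ind by (simp add: if_distrib cong: if_cong)
    also have "\<dots> = (\<Sum>n\<in>{k-1}. if n = k - 1 then ennreal (c * a (Suc n)) else 0)"
      by (rule suminf_finite) auto
    also have "\<dots> = ennreal (c * a k)" using k1 by simp
    finally show ?thesis using True by (simp add: k_def)
  qed
  have "(\<integral>\<^sup>+y. ennreal (c * a (nat \<lceil>c*y\<rceil>) * indicator {0<..} y) \<partial>lborel)
     = (\<integral>\<^sup>+y. (\<Sum>n. ennreal (c * a (Suc n)) * indicator {real n / c <.. real (Suc n) / c} y) \<partial>lborel)"
    by (simp only: pw)
  also have "\<dots> = (\<Sum>n. \<integral>\<^sup>+y. ennreal (c * a (Suc n)) * indicator {real n / c <.. real (Suc n) / c} y \<partial>lborel)"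
    by (rule nn_integral_suminf) auto
  also have "\<dots> = (\<Sum>n. ennreal (a (Suc n)))"
  proof (rule suminf_cong)
    fix n
    have le: "real n / c \<le> real (Suc n) / c" using c by (simp add: divide_right_mono)
    have "(\<integral>\<^sup>+y. ennreal (c * a (Suc n)) * indicator {real n / c <.. real (Suc n) / c} y \<partial>lborel)
       = ennreal (c * a (Suc n)) * ennreal (real (Suc n) / c - real n / c)"
      using le by (simp add: nn_integral_cmult_indicator emeasure_lborel_Ioc)
    also have "\<dots> = ennreal (a (Suc n))"
    proof -
      have "real (Suc n) / c - real n / c = 1 / c" by (simp add: diff_divide_distrib[symmetric])
      then show ?thesis using c a[of "Suc n"] by (simp add: ennreal_mult'[symmetric])
    qed
    finally show "(\<integral>\<^sup>+y. ennreal (c * a (Suc n)) * indicator {real n / c <.. real (Suc n) / c} y \<partial>lborel) = ennreal (a (Suc n))" .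
  qed
  finally show ?thesis .
qed


definition wt :: "nat \<Rightarrow> nat \<Rightarrow> real" where
  "wt m n = real n * phi n m * alpha powi (- int n)"
definition Am :: "nat \<Rightarrow> real" where
  "Am m = Kf m * (9/4)^m / real m"
definition gf :: "real \<Rightarrow> real" where
  "gf y = exp (- 1 / (3 * y)) / (y * sqrt y)"
definition core :: "nat \<Rightarrow> nat \<Rightarrow> real" where
  "core m n = 2 * bseq n * Qf m n *
     (real m ^ 3 * sqrt (real n) / ((2*real m+2*real n+1)*(2*real m+2*real n+2)))"

lemma Kf_pos: "Kf m > 0" by (simp add: Kf_def)

lemma Am_pos: "m \<ge> 1 \<Longrightarrow> Am m > 0" by (simp add: Am_def Kf_pos)

lemma wt_nonneg: "wt m n \<ge> 0"
  by (simp add: wt_def phi_def alpha_def)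

lemma core_eq:
  assumes m: "m \<ge> 1" and n: "n \<ge> 1"
  shows "real m ^ 2 * wt m n / Am m = core m n"
proof -
  have K: "Kf m > 0" by (rule Kf_pos)
  have mp: "real m > 0" using m by simp
  have sn: "sqrt (real n) * sqrt (real n) = real n" by simp
  have "real m ^ 2 * wt m n / Am m = real m ^ 2 * (real n * (2 * Bf n * Kf m * (9/4)^m * Qf m n / ((2*real m+2*real n+1) * (2*real m+2*real n+2)))) / (Kf m * (9/4)^m / real m)"
    unfolding wt_def Am_def using phi_decomp[OF n, of m] by (simp add: mult.assoc)
  also have "\<dots> = 2 * real n * Bf n * Qf m n * real m ^ 3 / ((2*real m+2*real n+1)*(2*real m+2*real n+2))"
  proof -
    have g: "K > 0 \<Longrightarrow> M > 0 \<Longrightarrow> E > 0 \<Longrightarrow> M^2 * (N*(2*B*K*E*Q/D)) / (K*E/M) = 2*N*B*Q*M^3/D"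
      for K M E N B Q D :: real
      by (simp add: field_simps power2_eq_square power3_eq_cube)
    show ?thesis by (rule g) (use K mp in auto)
  qed
  also have "\<dots> = 2 * (sqrt (real n) * Bf n) * Qf m n * (real m ^ 3 * sqrt (real n) / ((2*real m+2*real n+1)*(2*real m+2*real n+2)))"
  proof -
    have g: "2 * (s * B) * Q * (M * s / D) = 2 * (s * s) * B * Q * M / D" for s B Q M D :: real
      by (simp add: field_simps)
    show ?thesis unfolding g sn ..
  qed
  finally show ?thesis by (simp add: core_def bseq_def)
qed

lemma lim_1_over_sq: "(\<lambda>m. 1 / real m ^ 2) \<longlonglongrightarrow> 0"
proof -
  have "(\<lambda>m. (1 / real m) * (1 / real m)) \<longlonglongrightarrow> 0 * 0"
    by (intro tendsto_mult lim_1_over_n)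
  then show ?thesis by (simp add: power2_eq_square)
qed

lemma core_lim_general:
  fixes n :: "nat \<Rightarrow> nat" and y :: real
  assumes y: "y > 0" and n1: "\<And>m. m \<ge> 1 \<Longrightarrow> n m \<ge> 1"
    and r: "(\<lambda>m. real (n m) / real m ^ 2) \<longlonglongrightarrow> y"
    and ninf: "filterlim n sequentially sequentially"
  shows "(\<lambda>m. core m (n m)) \<longlonglongrightarrow> beta / 2 * gf y"
proof -
  define r where "r m = real (n m) / real m ^ 2" for m
  have rl: "r \<longlonglongrightarrow> y" using r by (simp add: r_def[abs_def])
  have ev1: "eventually (\<lambda>m. m \<ge> (1::nat)) sequentially" by (rule eventually_ge_at_top)
  have bl: "(\<lambda>m. bseq (n m)) \<longlonglongrightarrow> beta"
    by (rule filterlim_compose[OF bseq_lim ninf])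
  have mi: "(\<lambda>m. 1 / real m) \<longlonglongrightarrow> 0" by (rule lim_1_over_n)
  have mi2: "(\<lambda>m. 1 / real m ^ 2) \<longlonglongrightarrow> 0" by (rule lim_1_over_sq)
  have Fl: "(\<lambda>m. real m ^ 3 * sqrt (real (n m)) / ((2*real m+2*real (n m)+1)*(2*real m+2*real (n m)+2)))
      \<longlonglongrightarrow> sqrt y / ((2*y) * (2*y))"
  proof -
    have "(\<lambda>m. sqrt (r m) / ((2 * (1/real m) + 2 * r m + 1/real m^2) * (2 * (1/real m) + 2 * r m + 2 * (1/real m^2))))
       \<longlonglongrightarrow> sqrt y / ((2 * 0 + 2 * y + 0) * (2 * 0 + 2 * y + 2 * 0))"
      using y by (intro tendsto_intros rl mi mi2) auto
    moreover have "eventually (\<lambda>m. sqrt (r m) / ((2 * (1/real m) + 2 * r m + 1/real m^2) * (2 * (1/real m) + 2 * r m + 2 * (1/real m^2)))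
       = real m ^ 3 * sqrt (real (n m)) / ((2*real m+2*real (n m)+1)*(2*real m+2*real (n m)+2))) sequentially"
      using ev1
    proof eventually_elim
      case (elim m)
      have mp: "real m > 0" using elim by simp
      have s: "sqrt (r m) = sqrt (real (n m)) / real m"
        unfolding r_def using mp by (simp add: real_sqrt_divide)
      have d1: "2 * (1/real m) + 2 * r m + 1/real m^2 = (2*real m+2*real (n m)+1) / real m ^ 2"
        unfolding r_def using mp by (simp add: field_simps power2_eq_square)
      have d2: "2 * (1/real m) + 2 * r m + 2 * (1/real m^2) = (2*real m+2*real (n m)+2) / real m ^ 2"
        unfolding r_def using mp by (simp add: field_simps power2_eq_square)
      have p: "(2*real m+2*real (n m)+1) > 0" "(2*real m+2*real (n m)+2) > 0" by auto
      show ?case unfolding s d1 d2 using mp p by (simp add: field_simps power2_eq_square power3_eq_cube)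
    qed
    ultimately show ?thesis by (simp add: tendsto_cong)
  qed
  have Ql: "(\<lambda>m. Qf m (n m)) \<longlonglongrightarrow> exp (- 1 / (3 * y))"
  proof (rule tendsto_sandwich)
    have "(\<lambda>m. exp (- (2 + 1/real m) / (6 * r m) - 4 * (1/real m) / (9 * r m ^ 2))) \<longlonglongrightarrow> exp (- (2 + 0) / (6 * y) - 4 * 0 / (9 * y^2))"
      using y by (intro tendsto_intros rl mi) auto
    moreover have "exp (- (2 + 0) / (6 * y) - 4 * 0 / (9 * y^2)) = exp (- 1 / (3 * y))" by simp
    ultimately show "(\<lambda>m. exp (- (2 + 1/real m) / (6 * r m) - 4 * (1/real m) / (9 * r m ^ 2))) \<longlonglongrightarrow> exp (- 1 / (3 * y))" by simp
    have "(\<lambda>m. exp (- (2 + 1/real m) / (6 * (r m + 1/real m)))) \<longlonglongrightarrow> exp (- (2 + 0) / (6 * (y + 0)))"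
      using y by (intro tendsto_intros rl mi) auto
    then show "(\<lambda>m. exp (- (2 + 1/real m) / (6 * (r m + 1/real m)))) \<longlonglongrightarrow> exp (- 1 / (3 * y))" by simp
    show "eventually (\<lambda>m. exp (- (2 + 1/real m) / (6 * r m) - 4 * (1/real m) / (9 * r m ^ 2)) \<le> Qf m (n m)) sequentially"
      using ev1
    proof eventually_elim
      case (elim m)
      have mp: "real m > 0" using elim by simp
      have np: "real (n m) > 0" using n1[OF elim] by simp
      have e: "- (2 + 1/real m) / (6 * r m) - 4 * (1/real m) / (9 * r m ^ 2)
          = - (real m * (2 * real m + 1)) / (6 * real (n m)) - 4 * real m ^ 3 / (9 * real (n m) ^ 2)"
        unfolding r_def using mp np by (simp add: field_simps power2_eq_square power3_eq_cube)
      show ?case unfolding e by (rule Qf_lower[OF n1[OF elim]])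
    qed
    show "eventually (\<lambda>m. Qf m (n m) \<le> exp (- (2 + 1/real m) / (6 * (r m + 1/real m)))) sequentially"
      using ev1
    proof eventually_elim
      case (elim m)
      have mp: "real m > 0" using elim by simp
      have np: "real (n m) > 0" using n1[OF elim] by simp
      have e1: "r m + 1/real m = (real (n m) + real m)/real m^2"
        unfolding r_def using mp by (simp add: field_simps power2_eq_square)
      have e2: "(2 + 1/real m) * real m^2 = real m * (2*real m+1)"
        using mp by (simp add: field_simps power2_eq_square)
      have ep: "(2 + 1/real m) / (6 * (r m + 1/real m))
          = (real m * (2 * real m + 1)) / (6 * (real (n m) + real m))"
        unfolding e1 e2[symmetric] by (simp add: divide_divide_eq_right)
      have e: "- (2 + 1/real m) / (6 * (r m + 1/real m))
          = - (real m * (2 * real m + 1)) / (6 * (real (n m) + real m))"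
        by (simp only: minus_divide_left[symmetric] ep)
      show ?case unfolding e by (rule Qf_upper[OF n1[OF elim]])
    qed
  qed
  have lim: "(\<lambda>m. core m (n m)) \<longlonglongrightarrow> 2 * beta * exp (- 1 / (3 * y)) * (sqrt y / ((2*y) * (2*y)))"
    unfolding core_def by (intro tendsto_intros bl Ql Fl)
  have eq: "2 * beta * exp (- 1 / (3 * y)) * (sqrt y / ((2*y) * (2*y))) = beta / 2 * gf y"
  proof -
    have "sqrt y * sqrt y = y" using y by simp
    then show ?thesis unfolding gf_def using y by (simp add: field_simps)
  qed
  show ?thesis using lim unfolding eq .
qed

lemma ceil_seq_props:
  fixes y :: real assumes y: "y > 0"
  defines "n \<equiv> \<lambda>m::nat. nat \<lceil>real m ^ 2 * y\<rceil>"
  shows "\<And>m. m \<ge> 1 \<Longrightarrow> n m \<ge> 1"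
    and "(\<lambda>m. real (n m) / real m ^ 2) \<longlonglongrightarrow> y"
    and "filterlim n sequentially sequentially"
    and "\<And>m. real m ^ 2 * y \<le> real (n m)"
    and "\<And>m. real (n m) \<le> real m ^ 2 * y + 1"
proof -
  show lo: "real m ^ 2 * y \<le> real (n m)" for m
    unfolding n_def by linarith
  show hi: "real (n m) \<le> real m ^ 2 * y + 1" for m
  proof -
    have "real m ^ 2 * y \<ge> 0" using y by simp
    then have "real (n m) = of_int \<lceil>real m ^ 2 * y\<rceil>" unfolding n_def by simp
    then show ?thesis using of_int_ceiling_le_add_one[of "real m ^ 2 * y"] by simp
  qed
  show "n m \<ge> 1" if "m \<ge> 1" for m
  proof -
    have "real m ^ 2 * y > 0" using that y by simp
    then show ?thesis using lo[of m] by linarith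
  qed
  show "(\<lambda>m. real (n m) / real m ^ 2) \<longlonglongrightarrow> y"
  proof (rule tendsto_sandwich)
    show "eventually (\<lambda>m. y \<le> real (n m) / real m ^ 2) sequentially"
      using eventually_ge_at_top[of "1::nat"]
      by eventually_elim (use lo in \<open>simp add: field_simps\<close>)
    show "eventually (\<lambda>m. real (n m) / real m ^ 2 \<le> y + 1 / real m ^ 2) sequentially"
      using eventually_ge_at_top[of "1::nat"]
      by eventually_elim (use hi in \<open>simp add: field_simps\<close>)
    show "(\<lambda>m. y) \<longlonglongrightarrow> y" by simp
    have "(\<lambda>m. y + 1 / real m ^ 2) \<longlonglongrightarrow> y + 0" by (intro tendsto_intros lim_1_over_sq)
    then show "(\<lambda>m. y + 1 / real m ^ 2) \<longlonglongrightarrow> y" by simp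
  qed
  show "filterlim n sequentially sequentially"
    unfolding filterlim_sequentially_iff_filterlim_real
  proof (rule filterlim_at_top_mono)
    show "LIM m sequentially. y * real m :> at_top"
      by (rule filterlim_tendsto_pos_mult_at_top[OF tendsto_const y filterlim_real_sequentially])
    show "eventually (\<lambda>m. y * real m \<le> real (n m)) sequentially"
      using eventually_ge_at_top[of "1::nat"]
    proof eventually_elim
      case (elim m)
      have "y * real m \<le> y * real m ^ 2" using elim y by (simp add: power2_eq_square)
      then show ?case using lo[of m] by (simp add: mult.commute)
    qed
  qed
qed

lemma core_lim:
  assumes y: "y > 0"
  shows "(\<lambda>m. core m (nat \<lceil>real m ^ 2 * y\<rceil>)) \<longlonglongrightarrow> beta / 2 * gf y"
  using ceil_seq_props[OF y] by (intro core_lim_general[OF y]) auto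


lemma Qf_le1: "n \<ge> 1 \<Longrightarrow> Qf m n \<le> 1"
proof -
  assume n: "n \<ge> 1"
  have "- (real m * (2 * real m + 1)) / (6 * (real n + real m)) \<le> 0"
    by (intro divide_nonpos_nonneg) auto
  then have "exp (- (real m * (2 * real m + 1)) / (6 * (real n + real m))) \<le> 1" by simp
  then show ?thesis using Qf_upper[OF n, of m] by linarith
qed

lemma Qf_upper2:
  assumes "n \<ge> 1"
  shows "Qf m n \<le> exp (- (real m ^ 2 / (3 * (real n + real m))))"
proof -
  have t: "real n + real m > 0" using assms by simp
  have "real m ^ 2 / (3 * (real n + real m)) \<le> (real m * (2 * real m + 1)) / (6 * (real n + real m))"
    using t by (simp add: field_simps power2_eq_square)
  then have "exp (- (real m * (2 * real m + 1)) / (6 * (real n + real m))) \<le> exp (- (real m ^ 2 / (3 * (real n + real m))))"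
    by simp
  then show ?thesis using Qf_upper[OF assms, of m] by linarith
qed

lemma usqrt_bound:
  fixes u :: real assumes u: "u \<ge> 0"
  shows "u * sqrt u * exp (- u / 3) \<le> 10"
proof -
  have e1: "2*u/9 \<le> exp (2*u/9)" using exp_ge_add_one_self[of "2*u/9"] by linarith
  have "(2*u/9)^3 \<le> exp (2*u/9) ^ 3" using e1 u by (intro power_mono) auto
  also have "exp (2*u/9) ^ 3 = exp (u/3) ^ 2"
    by (simp add: exp_of_nat_mult[symmetric])
  finally have a: "(2*u/9)^3 \<le> exp (u/3) ^ 2" .
  have "(u * sqrt u)^2 = u^3" using u by (simp add: power_mult_distrib power2_eq_square power3_eq_cube)
  also have "\<dots> = (729/8) * (2*u/9)^3" by (simp add: power3_eq_cube)
  also have "\<dots> \<le> (729/8) * exp (u/3) ^ 2" using a by simp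
  also have "\<dots> \<le> (10 * exp (u/3))^2" by (simp add: power_mult_distrib)
  finally have sq: "(u * sqrt u)^2 \<le> (10 * exp (u/3))^2" .
  have "u * sqrt u \<le> 10 * exp (u/3)"
    by (rule power2_le_imp_le[OF sq]) simp
  then have "u * sqrt u * exp (- u / 3) \<le> 10 * exp (u/3) * exp (- u/3)"
    by (intro mult_right_mono) auto
  also have "\<dots> = 10" by (simp add: exp_minus[symmetric] mult.assoc exp_add[symmetric])
  finally show ?thesis .
qed

lemma sq_le_prod: fixes a b c :: real shows "0 \<le> a \<Longrightarrow> a \<le> b \<Longrightarrow> a \<le> c \<Longrightarrow> 4 * a^2 \<le> (2*b) * (2*c)"
  using mult_mono[of a b a c] by (simp add: power2_eq_square)

lemma core_nonneg: "n \<ge> 1 \<Longrightarrow> core m n \<ge> 0"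
  unfolding core_def using bseq_nonneg[of n] Qf_pos[of n m] by simp

lemma core_bound1:
  assumes m: "m \<ge> 1" and n: "n \<ge> 1" and y: "y > 0" and ny: "real m ^ 2 * y \<le> real n"
  shows "core m n \<le> beta / (2 * (y * sqrt y))"
proof -
  define F where "F = real m ^ 3 * sqrt (real n) / ((2*real m+2*real n+1)*(2*real m+2*real n+2))"
  have np: "real n > 0" using n by simp
  have F0: "F \<ge> 0" by (simp add: F_def)
  have "F \<le> real m ^ 3 * sqrt (real n) / (4 * real n ^ 2)"
    unfolding F_def
  proof (rule divide_left_mono)
    have "4 * real n ^ 2 \<le> (2 * (real m + real n + 1/2)) * (2 * (real m + real n + 1))"
      by (rule sq_le_prod) auto
    then show "4 * real n ^ 2 \<le> (2*real m+2*real n+1)*(2*real m+2*real n+2)" by (simp add: algebra_simps)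
  qed (use np in auto)
  also have "\<dots> \<le> 1 / (4 * (y * sqrt y))"
  proof -
    have s1: "real m * sqrt y \<le> sqrt (real n)"
    proof -
      have "(real m * sqrt y)^2 \<le> real n" using y ny by (simp add: power_mult_distrib)
      then show ?thesis using y by (simp add: real_le_rsqrt)
    qed
    have "(real m * sqrt y)^3 \<le> sqrt (real n) ^ 3" using s1 y by (intro power_mono) auto
    moreover have c: "sqrt z ^ 3 = z * sqrt z" if "z \<ge> 0" for z :: real
    proof -
      have "sqrt z ^ 3 = sqrt z ^ 2 * sqrt z" by (simp add: power3_eq_cube power2_eq_square)
      then show ?thesis using that by simp
    qed
    ultimately have "real m ^ 3 * (y * sqrt y) \<le> real n * sqrt (real n)"
      using y np by (simp only: power_mult_distrib c)
    then have "real m ^ 3 * (y * sqrt y) * sqrt (real n) \<le> real n * sqrt (real n) * sqrt (real n)"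
      by (intro mult_right_mono) auto
    also have "\<dots> = real n ^ 2" using np by (simp add: power2_eq_square mult.assoc)
    finally have *: "real m ^ 3 * sqrt (real n) * (y * sqrt y) \<le> real n ^ 2" by (simp add: mult_ac)
    have ys: "y * sqrt y > 0" using y by simp
    show ?thesis using * ys np by (simp add: field_simps)
  qed
  finally have Fb: "F \<le> 1 / (4 * (y * sqrt y))" .
  have "core m n = 2 * bseq n * Qf m n * F" by (simp add: core_def F_def)
  also have "\<dots> \<le> 2 * beta * 1 * (1 / (4 * (y * sqrt y)))"
    using bseq_le_beta[of n] bseq_nonneg[of n] Qf_le1[OF n, of m] Qf_pos[OF n, of m] F0 Fb beta_pos
    by (intro mult_mono) auto
  also have "\<dots> = beta / (2 * (y * sqrt y))" by simp
  finally show ?thesis .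
qed

lemma core_bound2:
  assumes m: "m \<ge> 1" and n: "n \<ge> 1"
  shows "core m n \<le> 5 * beta"
proof -
  define t where "t = real n + real m"
  define u where "u = real m ^ 2 / t"
  have tp: "t > 0" using n by (simp add: t_def)
  have mp: "real m > 0" using m by simp
  have u0: "u \<ge> 0" using tp by (simp add: u_def)
  define F where "F = real m ^ 3 * sqrt (real n) / ((2*real m+2*real n+1)*(2*real m+2*real n+2))"
  have F0: "F \<ge> 0" by (simp add: F_def)
  have "F \<le> real m ^ 3 * sqrt t / (4 * t ^ 2)"
    unfolding F_def
  proof (rule frac_le)
    show "real m ^ 3 * sqrt (real n) \<le> real m ^ 3 * sqrt t" unfolding t_def by (intro mult_left_mono) auto
    show "0 < 4 * t^2" using tp by simp
    show "4 * t ^ 2 \<le> (2*real m+2*real n+1)*(2*real m+2*real n+2)"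
    proof -
      have "4 * t ^ 2 \<le> (2 * (real m + real n + 1/2)) * (2 * (real m + real n + 1))"
        unfolding t_def by (rule sq_le_prod) auto
      then show ?thesis by (simp add: algebra_simps)
    qed
  qed (use tp in auto)
  also have "\<dots> = u * sqrt u / 4"
  proof -
    have su: "sqrt u = real m / sqrt t" unfolding u_def using mp tp by (simp add: real_sqrt_divide)
    have tt: "t = sqrt t * sqrt t" using tp by simp
    have sp: "sqrt t > 0" using tp by simp
    have g: "M ^ 3 * s / (4 * (s * s) ^ 2) = (M ^ 2 / (s * s)) * (M / s) / 4" if "s > 0" for M s :: real
      using that by (simp add: field_simps power2_eq_square power3_eq_cube)
    have "real m ^ 3 * sqrt t / (4 * t ^ 2) = real m ^ 3 * sqrt t / (4 * (sqrt t * sqrt t) ^ 2)"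
      using tt by simp
    also have "\<dots> = (real m^2/(sqrt t * sqrt t)) * (real m / sqrt t) / 4" by (rule g[OF sp])
    also have "\<dots> = u * sqrt u / 4"
    proof -
      have uu: "real m^2/(sqrt t * sqrt t) = u" unfolding u_def using tp by simp
      show ?thesis by (simp only: uu su)
    qed
    finally show ?thesis .
  qed
  finally have Fb: "F \<le> u * sqrt u / 4" .
  have Qb: "Qf m n \<le> exp (- u / 3)"
    using Qf_upper2[OF n, of m] by (simp add: u_def t_def field_simps)
  have "core m n = 2 * bseq n * Qf m n * F" by (simp add: core_def F_def)
  also have "\<dots> \<le> 2 * beta * exp (- u / 3) * (u * sqrt u / 4)"
    using bseq_le_beta[of n] bseq_nonneg[of n] Qb Qf_pos[OF n, of m] F0 Fb beta_pos
    by (intro mult_mono) auto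
  also have "\<dots> = beta / 2 * (u * sqrt u * exp (- u / 3))" by simp
  also have "\<dots> \<le> beta / 2 * 10" using usqrt_bound[OF u0] beta_pos by (intro mult_left_mono) auto
  finally show ?thesis by simp
qed

lemma core_bound3:
  assumes m: "m \<ge> 1" and n: "n \<ge> 1" and y: "y \<ge> 1" and ny: "real m ^ 2 * y \<le> real n"
  shows "core m n \<le> beta * gf y"
proof -
  have yp: "y > 0" using y by simp
  have "exp (- 1 / (3 * y)) \<ge> 1/2"
  proof -
    have "1 / (3 * y) \<le> 1/3" using y by (simp add: field_simps)
    then have "1 + (- 1 / (3 * y)) \<ge> 1/2" by simp
    then show ?thesis using exp_ge_add_one_self[of "- 1 / (3 * y)"] by linarith
  qed
  then have "beta / (2 * (y * sqrt y)) \<le> beta * gf y"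
    unfolding gf_def using yp beta_pos by (simp add: field_simps)
  then show ?thesis using core_bound1[OF m n yp ny] by linarith
qed

lemma meas_test:
  fixes a :: "nat \<Rightarrow> real"
  shows "(\<lambda>y. ennreal (c * a (nat \<lceil>c*y\<rceil>) * indicator {0<..} y)) \<in> borel_measurable borel"
  by measurable


definition gsub :: "real \<Rightarrow> real" where "gsub v = 2 / (3 * v^2)"
definition gd :: "real \<Rightarrow> real" where "gd v = - 4 / (3 * v^3)"
definition lf :: "real \<Rightarrow> real" where "lf u = gf u / sqrt (3 * pi)"

lemma powr_m32: "y > 0 \<Longrightarrow> y powr (-3/2) = 1 / (y * sqrt y)"
proof -
  assume y: "y > 0"
  have e: "(3/2::real) = 1 + 1/2" by simp
  have "y powr (3/2) = y powr 1 * y powr (1/2)" unfolding e by (rule powr_add)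
  also have "\<dots> = y * sqrt y" using y by (simp add: powr_half_sqrt)
  finally have "y powr (3/2) = y * sqrt y" .
  moreover have "y powr (-3/2) = inverse (y powr (3/2))" using powr_minus[of y "3/2"] by simp
  ultimately show ?thesis by (simp add: inverse_eq_divide)
qed

lemma levy_gf: "y > 0 \<Longrightarrow> levy_density y = lf y"
proof -
  assume y: "y > 0"
  then have "levy_density y = 1 / sqrt (3 * pi) * (1 / (y * sqrt y)) * exp (- 1 / (3 * y))"
    unfolding levy_density_def powr_m32[OF y] using y by simp
  then show ?thesis unfolding lf_def gf_def by simp
qed

lemma levy_nonneg: "levy_density y \<ge> 0"
  unfolding levy_density_def by simp

lemma levy_meas[measurable]: "levy_density \<in> borel_measurable borel"
  unfolding levy_density_def by measurable

lemma lf_meas[measurable]: "lf \<in> borel_measurable borel"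
  unfolding lf_def gf_def by measurable

lemma lf_g:
  assumes v: "v < 0"
  shows "lf (gsub v) * gd v = 2 * std_normal_density v"
proof -
  define w where "w = - v"
  have w: "w > 0" using v by (simp add: w_def)
  have vw: "v = - w" by (simp add: w_def)
  have G: "gsub v = 2 / (3 * w^2)" by (simp add: gsub_def vw)
  have sG: "sqrt (gsub v) = sqrt 2 / (sqrt 3 * w)"
    unfolding G using w by (simp add: real_sqrt_divide real_sqrt_mult)
  have vv: "v^2 = w^2" by (simp add: vw)
  have ex: "- 1 / (3 * gsub v) = - (v^2) / 2"
    unfolding G vv using w by (simp add: field_simps)
  have s3: "sqrt (3 * pi) = sqrt 3 * sqrt pi" by (simp add: real_sqrt_mult)
  have s2: "sqrt (2 * pi) = sqrt 2 * sqrt pi" by (simp add: real_sqrt_mult)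
  have p: "sqrt 2 > 0" "sqrt 3 > 0" "sqrt pi > 0" by auto
  have "lf (gsub v) * gd v = exp (- (v^2) / 2) / (gsub v * sqrt (gsub v)) / sqrt (3 * pi) * gd v"
    unfolding lf_def gf_def ex ..
  also have "\<dots> = exp (- (v^2) / 2) / (2 / (3 * w^2) * (sqrt 2 / (sqrt 3 * w))) / (sqrt 3 * sqrt pi) * (4 / (3 * w^3))"
    unfolding sG s3 unfolding G unfolding gd_def vw by (simp add: power3_eq_cube)
  also have "\<dots> = 2 * (1 / (sqrt 2 * sqrt pi) * exp (- (v^2) / 2))"
  proof -
    have g: "X / (2 / (3 * w^2) * (a / (b * w))) / (b * c) * (4 / (3 * w^3)) = 2 * (1 / (a * c) * X)"
      if "a > 0" "b > 0" "c > 0" "w > 0" for a b c w X :: real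
      using that by (simp add: field_simps power2_eq_square power3_eq_cube)
    show ?thesis by (rule g) (use w p in auto)
  qed
  also have "\<dots> = 2 * std_normal_density v"
    unfolding std_normal_density_def s2 ..
  finally show ?thesis .
qed

lemma gsub_deriv: "x \<noteq> 0 \<Longrightarrow> (gsub has_real_derivative gd x) (at x)"
  unfolding gsub_def gd_def
  by (auto intro!: derivative_eq_intros simp: field_simps power2_eq_square power3_eq_cube)

lemma gsub_lim_bot: "(gsub \<longlongrightarrow> 0) at_bot"
proof -
  have "LIM x at_bot. (x::real)^2 :> at_top"
    by (rule filterlim_pow_at_bot_even[of 2 "\<lambda>x. x"]) (auto simp: filterlim_ident)
  then have "((\<lambda>x. inverse ((x::real)^2)) \<longlongrightarrow> 0) at_bot" by (rule tendsto_inverse_0_at_top)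
  then have "((\<lambda>x. 2/3 * inverse ((x::real)^2)) \<longlongrightarrow> 2/3 * 0) at_bot" by (intro tendsto_intros)
  moreover have "gsub = (\<lambda>x. 2/3 * inverse (x^2))" by (auto simp: gsub_def field_simps)
  ultimately show ?thesis by simp
qed

lemma gsub_lim_left0: "filterlim gsub at_top (at_left 0)"
proof -
  have sq: "filterlim (\<lambda>x::real. x^2) (at_right 0) (at_left 0)"
    unfolding filterlim_at
  proof
    show "eventually (\<lambda>x::real. x^2 \<in> {0<..} \<and> x^2 \<noteq> 0) (at_left 0)"
      by (simp add: eventually_at_filter)
    have "((\<lambda>x::real. x^2) \<longlongrightarrow> 0^2) (at_left 0)"
      by (intro tendsto_intros)
    then show "((\<lambda>x::real. x^2) \<longlongrightarrow> 0) (at_left 0)" by simp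
  qed
  have "filterlim (\<lambda>x::real. inverse (x^2)) at_top (at_left 0)"
    by (rule filterlim_compose[OF filterlim_inverse_at_top_right sq])
  then have "filterlim (\<lambda>x::real. 2/3 * inverse (x^2)) at_top (at_left 0)"
    using filterlim_tendsto_pos_mult_at_top[OF tendsto_const[of "2/3::real"]] by simp
  moreover have "gsub = (\<lambda>x. 2/3 * inverse (x^2))" by (auto simp: gsub_def field_simps)
  ultimately show ?thesis by simp
qed

lemma normal_set_integrable: "set_integrable lborel A (\<lambda>x. 2 * std_normal_density x)"
  if "A \<in> sets borel"
  unfolding set_integrable_def using that
  by (intro integrable_mult_indicator) auto

lemma subst_main:
  fixes b :: real and B :: ereal
  assumes b: "b \<le> 0" and B: "((ereal \<circ> gsub \<circ> real_of_ereal) \<longlongrightarrow> B) (at_left (ereal b))"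
  shows "set_integrable lborel (einterval 0 B) lf"
    "(LBINT x=0..B. lf x) = (LBINT x=-\<infinity>..ereal b. 2 * std_normal_density x)"
proof -
  have A: "((ereal \<circ> gsub \<circ> real_of_ereal) \<longlongrightarrow> 0) (at_right (-\<infinity>))"
    unfolding zero_ereal_def ereal_tendsto_simps using gsub_lim_bot .
  have I: "set_integrable lborel (einterval (-\<infinity>) (ereal b)) (\<lambda>x. lf (gsub x) * gd x)"
  proof -
    have "set_integrable lborel (einterval (-\<infinity>) (ereal b)) (\<lambda>x. 2 * std_normal_density x)"
      by (rule normal_set_integrable) simp
    moreover have "set_integrable lborel (einterval (-\<infinity>) (ereal b)) (\<lambda>x. 2 * std_normal_density x)
       = set_integrable lborel (einterval (-\<infinity>) (ereal b)) (\<lambda>x. lf (gsub x) * gd x)"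
    proof (rule set_integrable_cong)
      fix x assume "x \<in> einterval (-\<infinity>) (ereal b)"
      then have "x < 0" using b by simp
      then show "2 * std_normal_density x = lf (gsub x) * gd x" by (simp add: lf_g)
    qed auto
    ultimately show ?thesis by simp
  qed
  have ab: "- \<infinity> < ereal b" by simp
  note S = interval_integral_substitution_nonneg[OF ab, of gsub gd lf 0 B]
  have hyps: "\<And>x. - \<infinity> < ereal x \<Longrightarrow> ereal x < ereal b \<Longrightarrow> DERIV gsub x :> gd x"
    "\<And>x. - \<infinity> < ereal x \<Longrightarrow> ereal x < ereal b \<Longrightarrow> isCont lf (gsub x)"
    "\<And>x. - \<infinity> < ereal x \<Longrightarrow> ereal x < ereal b \<Longrightarrow> isCont gd x"
    "\<And>x. - \<infinity> < ereal x \<Longrightarrow> ereal x < ereal b \<Longrightarrow> 0 \<le> lf (gsub x)"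
    "\<And>x. - \<infinity> \<le> ereal x \<Longrightarrow> ereal x \<le> ereal b \<Longrightarrow> 0 \<le> gd x"
  proof -
    fix x assume "ereal x < ereal b"
    then have x: "x < 0" using b by simp
    show "DERIV gsub x :> gd x" using x by (intro gsub_deriv) auto
    have gp: "gsub x > 0" using x by (simp add: gsub_def)
    show "isCont lf (gsub x)" unfolding lf_def gf_def using gp
      by (intro continuous_intros) auto
    show "isCont gd x" unfolding gd_def using x by (intro continuous_intros) auto
    show "0 \<le> lf (gsub x)" unfolding lf_def gf_def using gp by simp
  next
    fix x assume "ereal x \<le> ereal b"
    then have x: "x \<le> 0" using b by simp
    have "x^3 = x^2 * x" by (simp add: power3_eq_cube power2_eq_square)
    also have "\<dots> \<le> 0" using x by (intro mult_nonneg_nonpos) auto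
    finally have "x^3 \<le> 0" .
    then show "0 \<le> gd x" unfolding gd_def by (simp add: divide_nonpos_neg divide_nonneg_nonpos)
  qed
  show "set_integrable lborel (einterval 0 B) lf"
    using S(1)[OF hyps A B I] .
  have "(LBINT x=0..B. lf x) = (LBINT x=-\<infinity>..ereal b. lf (gsub x) * gd x)"
    using S(2)[OF hyps A B I] .
  also have "\<dots> = (LBINT x=-\<infinity>..ereal b. 2 * std_normal_density x)"
  proof (rule interval_integral_cong)
    fix x assume "x \<in> einterval (min (-\<infinity>) (ereal b)) (max (-\<infinity>) (ereal b))"
    then have "x < 0" using b by simp
    then show "lf (gsub x) * gd x = 2 * std_normal_density x" by (simp add: lf_g)
  qed
  finally show "(LBINT x=0..B. lf x) = (LBINT x=-\<infinity>..ereal b. 2 * std_normal_density x)" .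
qed


abbreviation NN :: "real measure" where
  "NN \<equiv> density lborel (\<lambda>g. ennreal (std_normal_density g))"

lemma set_int_nn:
  fixes f :: "real \<Rightarrow> real"
  assumes E: "E \<in> sets borel" and I: "set_integrable lborel E f" and nn: "\<And>x. x \<in> E \<Longrightarrow> f x \<ge> 0"
  shows "ennreal (LINT x:E|lborel. f x) = (\<integral>\<^sup>+x. ennreal (f x) * indicator E x \<partial>lborel)"
proof -
  have i: "integrable lborel (\<lambda>x. indicator E x *\<^sub>R f x)" using I by (simp add: set_integrable_def)
  have "(\<integral>\<^sup>+x. ennreal (indicator E x *\<^sub>R f x) \<partial>lborel) = ennreal (integral\<^sup>L lborel (\<lambda>x. indicator E x *\<^sub>R f x))"
    by (rule nn_integral_eq_integral[OF i]) (auto simp: indicator_def nn)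
  moreover have "\<And>x. ennreal (indicator E x *\<^sub>R f x) = ennreal (f x) * indicator E x"
    by (auto simp: indicator_def)
  ultimately show ?thesis by (simp add: set_lebesgue_integral_def)
qed

lemma std_normal_sym: "std_normal_density (- x) = std_normal_density x"
  by (simp add: std_normal_density_def)

lemma normal_reflect:
  "(\<integral>\<^sup>+v. ennreal (std_normal_density v) * indicator {..<b} v \<partial>lborel)
   = (\<integral>\<^sup>+v. ennreal (std_normal_density v) * indicator {-b<..} v \<partial>lborel)"
proof -
  have "(\<integral>\<^sup>+v. ennreal (std_normal_density v) * indicator {..<b} v \<partial>lborel)
     = (\<integral>\<^sup>+v. ennreal (std_normal_density v) * indicator {..<b} v \<partial>(distr lborel borel uminus))"
    by (simp add: lborel_distr_uminus)
  also have "\<dots> = (\<integral>\<^sup>+v. ennreal (std_normal_density (- v)) * indicator {..<b} (- v) \<partial>lborel)"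
    by (subst nn_integral_distr) auto
  also have "\<dots> = (\<integral>\<^sup>+v. ennreal (std_normal_density v) * indicator {-b<..} v \<partial>lborel)"
    by (intro nn_integral_cong) (auto simp: std_normal_sym indicator_def)
  finally show ?thesis .
qed

lemma normal_total: "(\<integral>\<^sup>+v. ennreal (std_normal_density v) \<partial>lborel) = 1"
proof -
  have "emeasure NN (space NN) = 1"
    by (rule prob_space.emeasure_space_1[OF prob_space_normal_density]) simp
  then have "emeasure NN UNIV = 1" by simp
  then show ?thesis by (simp add: emeasure_density)
qed

lemma point_null: "(\<integral>\<^sup>+v. ennreal (f v) * indicator {c} v \<partial>lborel) = 0"
proof -
  have "(\<integral>\<^sup>+v. ennreal (f v) * indicator {c} v \<partial>lborel) = (\<integral>\<^sup>+v. ennreal (f c) * indicator {c} v \<partial>lborel)"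
    by (intro nn_integral_cong) (auto simp: indicator_def)
  also have "\<dots> = 0" by (simp add: nn_integral_cmult_indicator)
  finally show ?thesis .
qed

lemma normal_half: "(\<integral>\<^sup>+v. ennreal (2 * std_normal_density v) * indicator {..<0} v \<partial>lborel) = 1"
proof -
  define F where "F A = (\<integral>\<^sup>+v. ennreal (std_normal_density v) * indicator A v \<partial>lborel)" for A :: "real set"
  have "1 = (\<integral>\<^sup>+v. ennreal (std_normal_density v) * indicator {..<0} v
            + (ennreal (std_normal_density v) * indicator {0<..} v + ennreal (std_normal_density v) * indicator {0} v) \<partial>lborel)"
    unfolding normal_total[symmetric]
    by (intro nn_integral_cong) (auto simp: indicator_def)
  also have "\<dots> = F {..<0} + (F {0<..} + F {0})"
    unfolding F_def by (subst nn_integral_add; (subst nn_integral_add)?) auto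
  also have "F {0} = 0" unfolding F_def by (rule point_null)
  also have "F {0<..} = F {..<0}" unfolding F_def using normal_reflect[of 0] by simp
  finally have h: "1 = 2 * F {..<0}" by (simp add: mult_2)
  have "(\<integral>\<^sup>+v. ennreal (2 * std_normal_density v) * indicator {..<0} v \<partial>lborel) = 2 * F {..<0}"
    unfolding F_def by (subst nn_integral_cmult[symmetric]) (auto simp: ennreal_mult mult.assoc)
  then show ?thesis using h by simp
qed

lemma levy_emeasure: "A \<in> sets borel \<Longrightarrow> emeasure levy_law A = (\<integral>\<^sup>+x. ennreal (levy_density x) * indicator A x \<partial>lborel)"
  unfolding levy_law_def by (simp add: emeasure_density)

lemma levy_lf_ind: "ennreal (levy_density x) * indicator A x = ennreal (lf x) * indicator (A \<inter> {0<..}) x"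
proof (cases "x > 0")
  case True then show ?thesis by (simp add: levy_gf indicator_def)
next
  case False then show ?thesis by (simp add: levy_density_def indicator_def)
qed

lemma levy_total: "emeasure levy_law UNIV = 1"
proof -
  have B: "((ereal \<circ> gsub \<circ> real_of_ereal) \<longlongrightarrow> \<infinity>) (at_left (ereal 0))"
    unfolding ereal_tendsto_simps using gsub_lim_left0 .
  note S = subst_main[OF order_refl B]
  have "emeasure levy_law UNIV = (\<integral>\<^sup>+x. ennreal (levy_density x) * indicator UNIV x \<partial>lborel)"
    by (rule levy_emeasure) simp
  also have "\<dots> = (\<integral>\<^sup>+x. ennreal (lf x) * indicator (UNIV \<inter> {0<..}) x \<partial>lborel)"
    by (simp only: levy_lf_ind)
  also have "\<dots> = (\<integral>\<^sup>+x. ennreal (lf x) * indicator {0<..} x \<partial>lborel)"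
    by simp
  also have "\<dots> = ennreal (LINT x:{0<..}|lborel. lf x)"
  proof -
    have e: "einterval 0 \<infinity> = {0::real<..}" by (simp add: zero_ereal_def)
    have I0: "set_integrable lborel {0<..} lf" using S(1) unfolding e .
    show ?thesis by (rule set_int_nn[symmetric, OF _ I0]) (auto simp: lf_def gf_def)
  qed
  also have "(LINT x:{0<..}|lborel. lf x) = (LBINT x=0..\<infinity>. lf x)"
    by (simp add: interval_integral_to_infinity_eq zero_ereal_def)
  also have "\<dots> = (LBINT x=-\<infinity>..ereal 0. 2 * std_normal_density x)" by (rule S(2))
  also have "\<dots> = (LINT x:{..<0}|lborel. 2 * std_normal_density x)"
    by (simp add: interval_lebesgue_integral_le_eq)
  also have "ennreal \<dots> = (\<integral>\<^sup>+v. ennreal (2 * std_normal_density v) * indicator {..<0} v \<partial>lborel)"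
    by (intro set_int_nn normal_set_integrable) auto
  also have "\<dots> = 1" by (rule normal_half)
  finally show ?thesis .
qed

lemma levy_space: "space levy_law = UNIV" by (simp add: levy_law_def)

lemma levy_prob: "prob_space levy_law"
  using levy_total by (intro prob_spaceI) (simp add: levy_space)

lemma levy_real_distribution: "real_distribution levy_law"
  unfolding real_distribution_def real_distribution_axioms_def
  using levy_prob by (simp add: levy_law_def)


abbreviation TT :: "real \<Rightarrow> real" where "TT \<equiv> (\<lambda>g. 2 / (3 * g ^ 2))"

lemma levy_cdf_pos:
  assumes x0: "x0 > 0"
  defines "s \<equiv> sqrt (2 / (3 * x0))"
  shows "emeasure levy_law {..x0} = (\<integral>\<^sup>+v. ennreal (2 * std_normal_density v) * indicator {..< -s} v \<partial>lborel)"
proof -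
  have sp: "s > 0" using x0 by (simp add: s_def)
  have ss: "s^2 = 2 / (3 * x0)" using x0 by (simp add: s_def)
  have gb: "gsub (-s) = x0" unfolding gsub_def using ss x0 by simp
  have cont: "continuous (at (-s) within {..< -s}) gsub"
    unfolding gsub_def using sp by (intro continuous_intros) auto
  have B: "((ereal \<circ> gsub \<circ> real_of_ereal) \<longlongrightarrow> ereal x0) (at_left (ereal (-s)))"
    unfolding ereal_tendsto_simps using cont gb by (simp add: continuous_within)
  have b0: "-s \<le> 0" using sp by simp
  note S = subst_main[OF b0 B]
  have e: "einterval 0 (ereal x0) = {0<..<x0}" by (simp add: zero_ereal_def)
  have I0: "set_integrable lborel {0<..<x0} lf" using S(1) unfolding e .
  have "emeasure levy_law {..x0} = (\<integral>\<^sup>+x. ennreal (levy_density x) * indicator {..x0} x \<partial>lborel)"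
    by (rule levy_emeasure) simp
  also have "\<dots> = (\<integral>\<^sup>+x. ennreal (lf x) * indicator ({..x0} \<inter> {0<..}) x \<partial>lborel)"
    by (simp only: levy_lf_ind)
  also have "\<dots> = (\<integral>\<^sup>+x. ennreal (lf x) * indicator {0<..<x0} x \<partial>lborel)"
    by (intro nn_integral_cong_AE, use AE_lborel_singleton[of x0] in eventually_elim) (auto simp: indicator_def)
  also have "\<dots> = ennreal (LINT x:{0<..<x0}|lborel. lf x)"
    by (rule set_int_nn[symmetric, OF _ I0]) (auto simp: lf_def gf_def)
  also have "(LINT x:{0<..<x0}|lborel. lf x) = (LBINT x=0..ereal x0. lf x)"
    using x0 by (subst interval_lebesgue_integral_le_eq) (auto simp: e zero_ereal_def[symmetric])
  also have "\<dots> = (LBINT x=-\<infinity>..ereal (-s). 2 * std_normal_density x)" by (rule S(2))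
  also have "\<dots> = (LINT x:{..< -s}|lborel. 2 * std_normal_density x)"
    by (simp add: interval_lebesgue_integral_le_eq)
  also have "ennreal \<dots> = (\<integral>\<^sup>+v. ennreal (2 * std_normal_density v) * indicator {..< -s} v \<partial>lborel)"
    by (intro set_int_nn normal_set_integrable) auto
  finally show ?thesis .
qed

lemma NN_prob: "prob_space NN"
  by (rule prob_space_normal_density) simp

lemma distr_emeasure:
  "A \<in> sets borel \<Longrightarrow> emeasure (distr NN borel TT) A = (\<integral>\<^sup>+v. ennreal (std_normal_density v) * indicator {v. TT v \<in> A} v \<partial>lborel)"
  by (subst emeasure_distr) (auto simp: emeasure_density vimage_def Int_def)

lemma normal_cdf_pos:
  assumes x0: "x0 > 0"
  defines "s \<equiv> sqrt (2 / (3 * x0))"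
  shows "emeasure (distr NN borel TT) {..x0} = (\<integral>\<^sup>+v. ennreal (2 * std_normal_density v) * indicator {..< -s} v \<partial>lborel)"
proof -
  have sp: "s > 0" using x0 by (simp add: s_def)
  have ss: "s^2 = 2 / (3 * x0)" using x0 by (simp add: s_def)
  define F where "F A = (\<integral>\<^sup>+v. ennreal (std_normal_density v) * indicator A v \<partial>lborel)" for A :: "real set"
  have key: "TT v \<le> x0 \<longleftrightarrow> v < -s \<or> v > s" if v: "v \<noteq> 0" "v \<noteq> s" "v \<noteq> -s" for v
  proof -
    have v2: "v^2 > 0" using v by simp
    have "TT v \<le> x0 \<longleftrightarrow> 2 / (3 * x0) \<le> v^2" using v2 x0 by (simp add: field_simps)
    also have "\<dots> \<longleftrightarrow> s^2 \<le> v^2" using ss by simp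
    also have "\<dots> \<longleftrightarrow> s \<le> \<bar>v\<bar>" using sp by (simp add: abs_le_square_iff[symmetric] abs_of_pos)
    also have "\<dots> \<longleftrightarrow> v < -s \<or> v > s" using v by auto
    finally show ?thesis .
  qed
  have "emeasure (distr NN borel TT) {..x0} = (\<integral>\<^sup>+v. ennreal (std_normal_density v) * indicator {v. TT v \<in> {..x0}} v \<partial>lborel)"
    by (rule distr_emeasure) simp
  also have "\<dots> = (\<integral>\<^sup>+v. ennreal (std_normal_density v) * indicator {..< -s} v + ennreal (std_normal_density v) * indicator {s<..} v \<partial>lborel)"
  proof (rule nn_integral_cong_AE)
    have "AE v in lborel. v \<noteq> 0 \<and> v \<noteq> s \<and> v \<noteq> -s"
      using AE_lborel_singleton[of 0] AE_lborel_singleton[of s] AE_lborel_singleton[of "-s"] by eventually_elim auto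
    then show "AE v in lborel. ennreal (std_normal_density v) * indicator {v. TT v \<in> {..x0}} v =
        ennreal (std_normal_density v) * indicator {..< -s} v + ennreal (std_normal_density v) * indicator {s<..} v"
    proof eventually_elim
      case (elim v)
      then have k: "TT v \<le> x0 \<longleftrightarrow> v < -s \<or> v > s" using key by blast
      show ?case using k sp by (auto simp: indicator_def)
    qed
  qed
  also have "\<dots> = F {..< -s} + F {s<..}"
    unfolding F_def by (rule nn_integral_add) auto
  also have "F {s<..} = F {..< -s}" unfolding F_def using normal_reflect[of "-s"] by simp
  also have "F {..< -s} + F {..< -s} = (\<integral>\<^sup>+v. ennreal (2 * std_normal_density v) * indicator {..< -s} v \<partial>lborel)"
    unfolding F_def mult_2[symmetric]
    by (subst nn_integral_cmult[symmetric]) (auto simp: ennreal_mult mult.assoc)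
  finally show ?thesis .
qed

lemma cdf_nonpos:
  assumes x0: "x0 \<le> 0"
  shows "emeasure (distr NN borel TT) {..x0} = 0" "emeasure levy_law {..x0} = 0"
proof -
  have "emeasure (distr NN borel TT) {..x0} = (\<integral>\<^sup>+v. ennreal (std_normal_density v) * indicator {v. TT v \<in> {..x0}} v \<partial>lborel)"
    by (rule distr_emeasure) simp
  also have "\<dots> = (\<integral>\<^sup>+(v::real). 0 \<partial>lborel)"
  proof (rule nn_integral_cong_AE[where v="\<lambda>_. 0"])
    show "AE v in lborel. ennreal (std_normal_density v) * indicator {v. TT v \<in> {..x0}} v = 0"
      using AE_lborel_singleton[of 0]
    proof eventually_elim
      case (elim v)
      then have pos: "2 / (3 * v^2) > (0::real)" by simp
      have nle: "\<not> (2 / (3 * v^2) \<le> x0)" using pos x0 by linarith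
      show ?case using nle by (simp add: indicator_def)
    qed
  qed
  finally show "emeasure (distr NN borel TT) {..x0} = 0" by simp
  have "emeasure levy_law {..x0} = (\<integral>\<^sup>+x. ennreal (levy_density x) * indicator {..x0} x \<partial>lborel)"
    by (rule levy_emeasure) simp
  also have "\<dots> = (\<integral>\<^sup>+(x::real). 0 \<partial>lborel)"
    using x0 by (intro nn_integral_cong) (auto simp: levy_density_def indicator_def)
  finally show "emeasure levy_law {..x0} = 0" by simp
qed

lemma cdf_emeasure_eq: "emeasure (distr NN borel TT) {..x} = emeasure levy_law {..x}"
proof (cases "x > 0")
  case True then show ?thesis using levy_cdf_pos[OF True] normal_cdf_pos[OF True] by simp
next
  case False then show ?thesis using cdf_nonpos[of x] by simp
qed

theorem part2: "distr NN borel TT = levy_law"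
proof (rule cdf_unique)
  show "real_distribution (distr NN borel TT)"
    by (rule prob_space.real_distribution_distr[OF NN_prob]) simp
  show "real_distribution levy_law" by (rule levy_real_distribution)
  show "cdf (distr NN borel TT) = cdf levy_law"
    unfolding cdf_def measure_def by (simp add: cdf_emeasure_eq)
qed


definition acut :: "(nat \<Rightarrow> nat \<Rightarrow> bool) \<Rightarrow> nat \<Rightarrow> nat \<Rightarrow> real" where
  "acut c m n = (if c m n then wt m n / Am m else 0)"

definition uf :: "(nat \<Rightarrow> nat \<Rightarrow> bool) \<Rightarrow> nat \<Rightarrow> real \<Rightarrow> ennreal" where
  "uf c m y = ennreal (real m ^ 2 * acut c m (nat \<lceil>real m ^ 2 * y\<rceil>) * indicator {0<..} y)"

definition domf :: "real \<Rightarrow> ennreal" where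
  "domf y = ennreal (5 * beta) * indicator {0<..1} y + ennreal (beta * sqrt (3 * pi)) * (ennreal (levy_density y) * indicator {1<..} y)"

lemma Am_nonneg: "Am m \<ge> 0"
  by (simp add: Am_def Kf_def)

lemma acut_nonneg: "acut c m n \<ge> 0"
  unfolding acut_def using wt_nonneg[of m n] Am_nonneg[of m] by simp

lemma uf_meas[measurable]: "uf c m \<in> borel_measurable borel"
  unfolding uf_def by measurable

lemma domf_meas[measurable]: "domf \<in> borel_measurable borel"
  unfolding domf_def by measurable

lemma domf_finite: "(\<integral>\<^sup>+y. domf y \<partial>lborel) < \<infinity>"
proof -
  have "(\<integral>\<^sup>+y. domf y \<partial>lborel) = (\<integral>\<^sup>+(y::real). ennreal (5 * beta) * indicator {0<..1} y \<partial>lborel)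
      + (\<integral>\<^sup>+y. ennreal (beta * sqrt (3 * pi)) * (ennreal (levy_density y) * indicator {1<..} y) \<partial>lborel)"
    unfolding domf_def by (rule nn_integral_add) auto
  also have "(\<integral>\<^sup>+(y::real). ennreal (5 * beta) * indicator {0<..1} y \<partial>lborel) = ennreal (5 * beta) * emeasure lborel {0<..1::real}"
    by (rule nn_integral_cmult_indicator) simp
  also have "(\<integral>\<^sup>+y. ennreal (beta * sqrt (3 * pi)) * (ennreal (levy_density y) * indicator {1<..} y) \<partial>lborel)
      = ennreal (beta * sqrt (3 * pi)) * (\<integral>\<^sup>+y. ennreal (levy_density y) * indicator {1<..} y \<partial>lborel)"
    by (rule nn_integral_cmult) simp
  also have "(\<integral>\<^sup>+y. ennreal (levy_density y) * indicator {1<..} y \<partial>lborel) = emeasure levy_law {1<..}"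
    by (rule levy_emeasure[symmetric]) simp
  also have "emeasure lborel {0<..1::real} = ennreal 1" by (simp add: emeasure_lborel_Ioc)
  finally have eq: "(\<integral>\<^sup>+y. domf y \<partial>lborel) = ennreal (5 * beta) * ennreal 1 + ennreal (beta * sqrt (3 * pi)) * emeasure levy_law {1<..}" .
  have le1: "emeasure levy_law {1<..} \<le> 1"
    using prob_space.emeasure_le_1[OF levy_prob] by simp
  have "ennreal (beta * sqrt (3 * pi)) * emeasure levy_law {1<..} \<le> ennreal (beta * sqrt (3 * pi)) * 1"
    by (rule mult_left_mono[OF le1]) simp
  then have "(\<integral>\<^sup>+y. domf y \<partial>lborel) \<le> ennreal (5 * beta) * ennreal 1 + ennreal (beta * sqrt (3 * pi)) * 1"
    unfolding eq by (rule add_left_mono)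
  also have "\<dots> < \<infinity>" by (simp add: ennreal_mult_less_top)
  finally show ?thesis .
qed

lemma uf_pos_val:
  assumes m: "m \<ge> 1" and y: "y > 0"
  shows "uf c m y = (if c m (nat \<lceil>real m ^ 2 * y\<rceil>) then ennreal (core m (nat \<lceil>real m ^ 2 * y\<rceil>)) else 0)"
proof -
  have n1: "nat \<lceil>real m ^ 2 * y\<rceil> \<ge> 1" using ceil_seq_props(1)[OF y m] by simp
  show ?thesis unfolding uf_def acut_def using y core_eq[OF m n1]
    by (simp add: indicator_def)
qed

lemma uf_bound: "uf c m y \<le> domf y"
proof (cases "m \<ge> 1 \<and> y > 0")
  case False
  then have "uf c m y = 0"
    by (cases "m = 0") (auto simp: uf_def indicator_def)
  then show ?thesis by simp
next
  case True
  then have m: "m \<ge> 1" and y: "y > 0" by auto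
  define n where "n = nat \<lceil>real m ^ 2 * y\<rceil>"
  have n1: "n \<ge> 1" unfolding n_def using ceil_seq_props(1)[OF y m] by simp
  have ny: "real m ^ 2 * y \<le> real n" unfolding n_def using ceil_seq_props(4)[OF y] by simp
  have "uf c m y \<le> ennreal (core m n)"
    using uf_pos_val[OF m y, of c] by (simp add: n_def)
  also have "\<dots> \<le> domf y"
  proof (cases "y \<le> 1")
    case True
    have "ennreal (core m n) \<le> ennreal (5 * beta)" using core_bound2[OF m n1] by (rule ennreal_leI)
    also have "\<dots> = ennreal (5 * beta) * indicator {0<..1} y" using True y by simp
    also have "\<dots> \<le> domf y" unfolding domf_def by simp
    finally show ?thesis .
  next
    case False
    then have y1: "y \<ge> 1" by simp
    have "ennreal (core m n) \<le> ennreal (beta * gf y)" using core_bound3[OF m n1 y1 ny] by (rule ennreal_leI)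
    also have "beta * gf y = beta * sqrt (3 * pi) * levy_density y"
      using y by (simp add: levy_gf lf_def)
    also have "ennreal (beta * sqrt (3 * pi) * levy_density y) = ennreal (beta * sqrt (3 * pi)) * ennreal (levy_density y)"
      by (rule ennreal_mult) (use beta_pos levy_nonneg in auto)
    also have "\<dots> = ennreal (beta * sqrt (3 * pi)) * (ennreal (levy_density y) * indicator {1<..} y)"
      using False by simp
    also have "\<dots> \<le> domf y" unfolding domf_def by simp
    finally show ?thesis .
  qed
  finally show ?thesis .
qed

lemma uf_lim:
  assumes L: "L \<in> sets borel"
    and ev: "AE y in lborel. y > 0 \<longrightarrow> eventually (\<lambda>m. c m (nat \<lceil>real m ^ 2 * y\<rceil>) \<longleftrightarrow> y \<in> L) sequentially"
  shows "(\<lambda>m. \<integral>\<^sup>+y. uf c m y \<partial>lborel) \<longlonglongrightarrow> (\<integral>\<^sup>+y. ennreal (beta / 2 * gf y) * indicator ({0<..} \<inter> L) y \<partial>lborel)"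
proof (rule nn_integral_dominated_convergence[where w=domf])
  show "\<And>j. AE x in lborel. uf c j x \<le> domf x" by (simp add: uf_bound)
  show "(\<integral>\<^sup>+x. domf x \<partial>lborel) < \<infinity>" by (rule domf_finite)
  show "(\<lambda>y. ennreal (beta / 2 * gf y) * indicator ({0<..} \<inter> L) y) \<in> borel_measurable lborel"
    using L unfolding gf_def by measurable
  show "AE x in lborel. (\<lambda>i. uf c i x) \<longlonglongrightarrow> ennreal (beta / 2 * gf x) * indicator ({0<..} \<inter> L) x"
    using ev
  proof eventually_elim
    case (elim y)
    show ?case
    proof (cases "y > 0")
      case False
      then have "\<And>i. uf c i y = 0" by (simp add: uf_def)
      then show ?thesis using False by (simp add: indicator_def)
    next
      case True
      have evc: "eventually (\<lambda>m. c m (nat \<lceil>real m ^ 2 * y\<rceil>) \<longleftrightarrow> y \<in> L) sequentially"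
        using elim True by simp
      have cl: "(\<lambda>m. core m (nat \<lceil>real m ^ 2 * y\<rceil>)) \<longlonglongrightarrow> beta / 2 * gf y" by (rule core_lim[OF True])
      show ?thesis
      proof (cases "y \<in> L")
        case yL: True
        have "(\<lambda>m. ennreal (core m (nat \<lceil>real m ^ 2 * y\<rceil>))) \<longlonglongrightarrow> ennreal (beta / 2 * gf y)"
          using cl by (rule tendsto_ennrealI)
        moreover have "eventually (\<lambda>m. ennreal (core m (nat \<lceil>real m ^ 2 * y\<rceil>)) = uf c m y) sequentially"
          using evc eventually_ge_at_top[of "1::nat"]
          by eventually_elim (use yL True in \<open>simp add: uf_pos_val\<close>)
        ultimately have "(\<lambda>m. uf c m y) \<longlonglongrightarrow> ennreal (beta / 2 * gf y)"
          by (rule Lim_transform_eventually)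
        then show ?thesis using yL True by (simp add: indicator_def)
      next
        case yL: False
        have "eventually (\<lambda>m. 0 = uf c m y) sequentially"
          using evc eventually_ge_at_top[of "1::nat"]
          by eventually_elim (use yL True in \<open>simp add: uf_pos_val\<close>)
        then have "(\<lambda>m. uf c m y) \<longlonglongrightarrow> 0"
          by (rule Lim_transform_eventually[OF tendsto_const])
        then show ?thesis using yL by (simp add: indicator_def)
      qed
    qed
  qed
qed auto


lemma acut0: "acut c m 0 = 0"
  by (simp add: acut_def wt_def)

lemma uf_int_sum: "m \<ge> 1 \<Longrightarrow> (\<integral>\<^sup>+y. uf c m y \<partial>lborel) = (\<Sum>n. ennreal (acut c m (Suc n)))"
  unfolding uf_def by (rule staircase) (auto intro: acut_nonneg)

lemma acut_summable:
  assumes m: "m \<ge> 1"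
  shows "summable (acut c m)" "ennreal (suminf (acut c m)) = (\<integral>\<^sup>+y. uf c m y \<partial>lborel)"
proof -
  have "(\<integral>\<^sup>+y. uf c m y \<partial>lborel) \<le> (\<integral>\<^sup>+y. domf y \<partial>lborel)"
    by (intro nn_integral_mono uf_bound)
  then have fin: "(\<Sum>n. ennreal (acut c m (Suc n))) \<noteq> \<top>"
    using domf_finite uf_int_sum[OF m, of c] by (auto simp: top_unique)
  have s1: "summable (\<lambda>n. acut c m (Suc n))"
    by (rule summable_suminf_not_top[OF _ fin]) (rule acut_nonneg)
  then show s: "summable (acut c m)" by (simp add: summable_Suc_iff)
  have "suminf (acut c m) = (\<Sum>n. acut c m (Suc n))"
    using suminf_split_head[OF s] by (simp add: acut0)
  moreover have e2: "(\<Sum>n. ennreal (acut c m (Suc n))) = ennreal (\<Sum>n. acut c m (Suc n))"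
    by (rule suminf_ennreal2[OF _ s1]) (rule acut_nonneg)
  ultimately have "ennreal (suminf (acut c m)) = (\<Sum>n. ennreal (acut c m (Suc n)))"
    by simp
  then show "ennreal (suminf (acut c m)) = (\<integral>\<^sup>+y. uf c m y \<partial>lborel)"
    using uf_int_sum[OF m, of c] by simp
qed

definition KK :: real where "KK = beta / 2 * sqrt (3 * pi)"

lemma KK_pos: "KK > 0" by (simp add: KK_def beta_pos)

lemma limit_int:
  assumes L: "L \<in> sets borel"
  shows "(\<integral>\<^sup>+y. ennreal (beta / 2 * gf y) * indicator ({0<..} \<inter> L) y \<partial>lborel) = ennreal (KK * measure levy_law L)"
proof -
  have pw: "ennreal (beta / 2 * gf y) * indicator ({0<..} \<inter> L) y = ennreal KK * (ennreal (levy_density y) * indicator L y)" for y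
  proof (cases "y > 0")
    case True
    have "beta / 2 * gf y = KK * levy_density y" using True by (simp add: levy_gf lf_def KK_def)
    then have "ennreal (beta / 2 * gf y) = ennreal KK * ennreal (levy_density y)"
      by (simp add: ennreal_mult[symmetric] KK_pos less_imp_le levy_nonneg)
    then show ?thesis using True by (simp add: indicator_def)
  next
    case False
    then show ?thesis by (simp add: indicator_def levy_density_def)
  qed
  have "(\<integral>\<^sup>+y. ennreal (beta / 2 * gf y) * indicator ({0<..} \<inter> L) y \<partial>lborel)
      = ennreal KK * (\<integral>\<^sup>+y. ennreal (levy_density y) * indicator L y \<partial>lborel)"
    unfolding pw using L by (intro nn_integral_cmult) auto
  also have "\<dots> = ennreal KK * emeasure levy_law L" using levy_emeasure[OF L] by simp
  also have "emeasure levy_law L = ennreal (measure levy_law L)"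
  proof (rule emeasure_eq_ennreal_measure)
    have "emeasure levy_law L \<le> 1" using prob_space.emeasure_le_1[OF levy_prob] by simp
    then show "emeasure levy_law L \<noteq> \<top>" by (auto simp: top_unique)
  qed
  also have "ennreal KK * ennreal (measure levy_law L) = ennreal (KK * measure levy_law L)"
    using KK_pos by (simp add: ennreal_mult)
  finally show ?thesis .
qed

lemma sum_lim:
  assumes L: "L \<in> sets borel"
    and ev: "AE y in lborel. y > 0 \<longrightarrow> eventually (\<lambda>m. c m (nat \<lceil>real m ^ 2 * y\<rceil>) \<longleftrightarrow> y \<in> L) sequentially"
  shows "(\<lambda>m. suminf (acut c m)) \<longlonglongrightarrow> KK * measure levy_law L"
proof (rule tendsto_ennrealD)
  have "(\<lambda>m. \<integral>\<^sup>+y. uf c m y \<partial>lborel) \<longlonglongrightarrow> ennreal (KK * measure levy_law L)"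
    using uf_lim[OF L ev] unfolding limit_int[OF L] .
  moreover have "eventually (\<lambda>m. (\<integral>\<^sup>+y. uf c m y \<partial>lborel) = ennreal (suminf (acut c m))) sequentially"
    using eventually_ge_at_top[of "1::nat"] by eventually_elim (simp add: acut_summable)
  ultimately show "(\<lambda>m. ennreal (suminf (acut c m))) \<longlonglongrightarrow> ennreal (KK * measure levy_law L)"
    by (rule Lim_transform_eventually)
  show "eventually (\<lambda>m. 0 \<le> suminf (acut c m)) sequentially"
    using eventually_ge_at_top[of "1::nat"]
    by eventually_elim (intro suminf_nonneg acut_summable acut_nonneg; simp)
  show "0 \<le> KK * measure levy_law L" using KK_pos by simp
qed

lemma ev_le:
  fixes x :: real
  shows "AE y in lborel. y > 0 \<longrightarrow> eventually (\<lambda>m. real (nat \<lceil>real m ^ 2 * y\<rceil>) \<le> x * real m ^ 2 \<longleftrightarrow> y \<in> {..x}) sequentially"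
  using AE_lborel_singleton[of x]
proof eventually_elim
  case (elim y)
  show ?case
  proof
    assume y: "y > 0"
    note lo = ceil_seq_props(4)[OF y] and hi = ceil_seq_props(5)[OF y]
    show "eventually (\<lambda>m. real (nat \<lceil>real m ^ 2 * y\<rceil>) \<le> x * real m ^ 2 \<longleftrightarrow> y \<in> {..x}) sequentially"
    proof (cases "y < x")
      case True
      define N where "N = max 1 (nat \<lceil>1 / (x - y)\<rceil>)"
      show ?thesis using eventually_ge_at_top[of N]
      proof eventually_elim
        case (elim m)
        have m1: "real m \<ge> 1" using elim by (simp add: N_def)
        have "nat \<lceil>1 / (x - y)\<rceil> \<le> m" using elim by (simp add: N_def)
        then have "real (nat \<lceil>1 / (x - y)\<rceil>) \<le> real m" by (rule of_nat_mono)
        then have "real m \<ge> 1 / (x - y)" using real_nat_ceiling_ge[of "1 / (x - y)"] by linarith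
        then have a: "real m * (x - y) \<ge> 1" using True by (simp add: field_simps)
        have mm: "real m \<le> real m ^ 2" using m1 by (simp add: power2_eq_square)
        have b: "real m ^ 2 * (x - y) \<ge> real m * (x - y)"
          using mm True by (intro mult_right_mono) auto
        have c: "real m ^ 2 * y + 1 \<le> x * real m ^ 2" using a b by (simp add: algebra_simps)
        have d: "real (nat \<lceil>real m ^ 2 * y\<rceil>) \<le> x * real m ^ 2" using hi[of m] c by linarith
        show ?case using d True by simp
      qed
    next
      case False
      then have yx: "y > x" using elim by simp
      show ?thesis using eventually_ge_at_top[of "1::nat"]
      proof eventually_elim
        case (elim m)
        have "real m ^ 2 > 0" using elim by simp
        then have e: "real m ^ 2 * x < real m ^ 2 * y" using yx by simp
        have d: "\<not> real (nat \<lceil>real m ^ 2 * y\<rceil>) \<le> x * real m ^ 2" using lo[of m] e by (simp add: mult.commute)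
        show ?case using d yx by simp
      qed
    qed
  qed
qed

lemma ev_true: "AE y in lborel. y > 0 \<longrightarrow> eventually (\<lambda>m. (\<lambda>_ _. True) m (nat \<lceil>real m ^ 2 * y\<rceil>) \<longleftrightarrow> y \<in> UNIV) sequentially"
  by simp

lemma ev_gt:
  fixes t :: real
  shows "AE y in lborel. y > 0 \<longrightarrow> eventually (\<lambda>m. real (nat \<lceil>real m ^ 2 * y\<rceil>) > t * real m ^ 2 \<longleftrightarrow> y \<in> {t<..}) sequentially"
  using ev_le[of t]
proof eventually_elim
  case (elim y)
  show ?case
  proof
    assume "y > 0"
    then have "eventually (\<lambda>m. real (nat \<lceil>real m ^ 2 * y\<rceil>) \<le> t * real m ^ 2 \<longleftrightarrow> y \<in> {..t}) sequentially"
      using elim by blast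
    then show "eventually (\<lambda>m. real (nat \<lceil>real m ^ 2 * y\<rceil>) > t * real m ^ 2 \<longleftrightarrow> y \<in> {t<..}) sequentially"
      by eventually_elim auto
  qed
qed


abbreviation Tm :: "nat \<Rightarrow> real" where "Tm m \<equiv> suminf (acut (\<lambda>_ _. True) m)"

lemma Zt_eq:
  assumes m: "m \<ge> 1"
  shows "Zt m = Am m * Tm m"
proof -
  have A: "Am m > 0" by (rule Am_pos[OF m])
  have "Zt m = suminf (wt m)" unfolding Zt_def wt_def ..
  also have "wt m = (\<lambda>n. Am m * acut (\<lambda>_ _. True) m n)"
    using A by (auto simp: acut_def)
  also have "suminf \<dots> = Am m * Tm m"
    by (rule suminf_mult[OF acut_summable(1)[OF m]])
  finally show ?thesis .
qed

lemma size_law_meas[measurable]: "(\<lambda>n. real n / real m ^ 2) \<in> borel_measurable (size_law m)"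
  unfolding size_law_def by simp

lemma measure_size:
  assumes m: "m \<ge> 1"
  shows "measure (size_law m) {n. c m n} = suminf (acut c m) / Tm m"
proof -
  have A: "Am m > 0" by (rule Am_pos[OF m])
  have T0: "Tm m \<ge> 0" by (intro suminf_nonneg acut_summable[OF m] acut_nonneg)
  have s: "summable (\<lambda>n. acut c m n / Tm m)" by (intro summable_divide acut_summable[OF m])
  have pw: "ennreal (real n * phi n m * alpha powi (- int n) / Zt m) * indicator {n. c m n} n = ennreal (acut c m n / Tm m)" for n
  proof -
    have "real n * phi n m * alpha powi (- int n) / Zt m = (Am m * acut (\<lambda>_ _. True) m n) / (Am m * Tm m)"
      unfolding Zt_eq[OF m] using A by (simp add: acut_def wt_def)
    also have "\<dots> = acut (\<lambda>_ _. True) m n / Tm m" using A by simp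
    finally show ?thesis by (simp add: acut_def indicator_def)
  qed
  have "emeasure (size_law m) {n. c m n} = (\<integral>\<^sup>+n. ennreal (real n * phi n m * alpha powi (- int n) / Zt m) * indicator {n. c m n} n \<partial>count_space UNIV)"
    unfolding size_law_def by (subst emeasure_density) auto
  also have "\<dots> = (\<Sum>n. ennreal (acut c m n / Tm m))"
    unfolding pw by (rule nn_integral_count_space_nat)
  also have "\<dots> = ennreal (\<Sum>n. acut c m n / Tm m)"
    by (rule suminf_ennreal2[OF _ s]) (use acut_nonneg T0 in auto)
  also have "(\<Sum>n. acut c m n / Tm m) = suminf (acut c m) / Tm m"
    by (rule suminf_divide[OF acut_summable(1)[OF m]])
  finally have "emeasure (size_law m) {n. c m n} = ennreal (suminf (acut c m) / Tm m)" .
  moreover have "suminf (acut c m) / Tm m \<ge> 0"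
    using T0 by (intro divide_nonneg_nonneg suminf_nonneg acut_summable[OF m] acut_nonneg)
  ultimately show ?thesis by (simp add: measure_def)
qed

lemma measure_lim:
  assumes L: "L \<in> sets borel"
    and ev: "AE y in lborel. y > 0 \<longrightarrow> eventually (\<lambda>m. c m (nat \<lceil>real m ^ 2 * y\<rceil>) \<longleftrightarrow> y \<in> L) sequentially"
  shows "(\<lambda>m. measure (size_law m) {n. c m n}) \<longlonglongrightarrow> measure levy_law L"
proof -
  have num: "(\<lambda>m. suminf (acut c m)) \<longlonglongrightarrow> KK * measure levy_law L" by (rule sum_lim[OF L ev])
  have den: "(\<lambda>m. Tm m) \<longlonglongrightarrow> KK * measure levy_law UNIV" by (rule sum_lim[OF _ ev_true]) simp
  have u: "measure levy_law UNIV = 1"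
    using prob_space.prob_space[OF levy_prob] by (simp add: levy_space)
  have "(\<lambda>m. suminf (acut c m) / Tm m) \<longlonglongrightarrow> (KK * measure levy_law L) / (KK * measure levy_law UNIV)"
    using num den u KK_pos by (intro tendsto_divide) auto
  also have "(KK * measure levy_law L) / (KK * measure levy_law UNIV) = measure levy_law L"
    using u KK_pos by simp
  finally have *: "(\<lambda>m. suminf (acut c m) / Tm m) \<longlonglongrightarrow> measure levy_law L" .
  have "eventually (\<lambda>m. suminf (acut c m) / Tm m = measure (size_law m) {n. c m n}) sequentially"
    using eventually_ge_at_top[of "1::nat"] by eventually_elim (simp add: measure_size)
  then show ?thesis using * by (rule Lim_transform_eventually[rotated])
qed

lemma part1: "weak_conv_m scaled_size_law levy_law"
  unfolding weak_conv_m_def weak_conv_def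
proof (intro allI impI)
  fix x :: real
  have lim: "(\<lambda>m. measure (size_law m) {n. real n \<le> x * real m ^ 2}) \<longlonglongrightarrow> measure levy_law {..x}"
    by (rule measure_lim[OF _ ev_le]) simp
  have "eventually (\<lambda>m. measure (size_law m) {n. real n \<le> x * real m ^ 2} = cdf (scaled_size_law m) x) sequentially"
    using eventually_ge_at_top[of "1::nat"]
  proof eventually_elim
    case (elim m)
    have mp: "real m ^ 2 > 0" using elim by simp
    have "cdf (scaled_size_law m) x = measure (size_law m) ((\<lambda>n. real n / real m ^ 2) -` {..x} \<inter> space (size_law m))"
      unfolding cdf_def scaled_size_law_def by (rule measure_distr) auto
    also have "(\<lambda>n. real n / real m ^ 2) -` {..x} \<inter> space (size_law m) = {n. real n \<le> x * real m ^ 2}"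
      using mp by (auto simp: size_law_def divide_le_eq)
    finally show ?case by simp
  qed
  then have "(\<lambda>m. cdf (scaled_size_law m) x) \<longlonglongrightarrow> measure levy_law {..x}"
    using lim by (rule Lim_transform_eventually[rotated])
  then show "(\<lambda>m. cdf (scaled_size_law m) x) \<longlonglongrightarrow> cdf levy_law x"
    by (simp add: cdf_def)
qed

lemma levy_integrable: "integrable lborel levy_density"
proof (rule integrableI_nn_integral_finite)
  have "(\<integral>\<^sup>+x. ennreal (levy_density x) \<partial>lborel) = emeasure levy_law UNIV"
    using levy_emeasure[of UNIV] by simp
  then show "(\<integral>\<^sup>+x. ennreal (levy_density x) \<partial>lborel) = ennreal 1" using levy_total by simp
qed (auto simp: levy_nonneg)

lemma levy_tail:
  assumes t: "t > 0"
  shows "measure levy_law {t<..} = 1 / sqrt (3 * pi) * (LBINT x:{t<..}. x powr (-3/2) * exp (- 1 / (3 * x)))"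
proof -
  have si: "set_integrable lborel {t<..} levy_density"
    unfolding set_integrable_def by (intro integrable_mult_indicator levy_integrable) auto
  have "emeasure levy_law {t<..} = (\<integral>\<^sup>+x. ennreal (levy_density x) * indicator {t<..} x \<partial>lborel)"
    by (rule levy_emeasure) simp
  also have "\<dots> = ennreal (LINT x:{t<..}|lborel. levy_density x)"
    by (rule set_int_nn[symmetric, OF _ si]) (auto simp: levy_nonneg)
  finally have e: "emeasure levy_law {t<..} = ennreal (LINT x:{t<..}|lborel. levy_density x)" .
  have nn: "(LINT x:{t<..}|lborel. levy_density x) \<ge> 0"
    unfolding set_lebesgue_integral_def by (intro integral_nonneg_AE) (auto simp: levy_nonneg indicator_def)
  have "measure levy_law {t<..} = (LINT x:{t<..}|lborel. levy_density x)"
    using e nn by (simp add: measure_def)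
  also have "\<dots> = (LINT x:{t<..}|lborel. 1 / sqrt (3 * pi) * (x powr (-3/2) * exp (- 1 / (3 * x))))"
    using t by (intro set_lebesgue_integral_cong) (auto simp: levy_density_def)
  also have "\<dots> = 1 / sqrt (3 * pi) * (LBINT x:{t<..}. x powr (-3/2) * exp (- 1 / (3 * x)))"
    by (rule set_integral_mult_right)
  finally show ?thesis .
qed

lemma part3: "\<forall>t::real. t > 0 \<longrightarrow>
         (\<lambda>m. measure (size_law m) {n. real n > t * real m ^ 2})
         \<longlonglongrightarrow> 1 / sqrt (3 * pi) * (LBINT x:{t<..}. x powr (-3/2) * exp (- 1 / (3 * x)))"
proof (intro allI impI)
  fix t :: real assume t: "t > 0"
  have "(\<lambda>m. measure (size_law m) {n. real n > t * real m ^ 2}) \<longlonglongrightarrow> measure levy_law {t<..}"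
    by (rule measure_lim[OF _ ev_gt]) simp
  then show "(\<lambda>m. measure (size_law m) {n. real n > t * real m ^ 2})
         \<longlonglongrightarrow> 1 / sqrt (3 * pi) * (LBINT x:{t<..}. x powr (-3/2) * exp (- 1 / (3 * x)))"
    unfolding levy_tail[OF t] .
qed

theorem proposition6p3:
  shows "weak_conv_m scaled_size_law levy_law
    \<and> distr (density lborel (\<lambda>g. ennreal (std_normal_density g))) borel
          (\<lambda>g. 2 / (3 * g ^ 2)) = levy_law
    \<and> (\<forall>t::real. t > 0 \<longrightarrow>
         (\<lambda>m. measure (size_law m) {n. real n > t * real m ^ 2})
         \<longlonglongrightarrow> 1 / sqrt (3 * pi) * (LBINT x:{t<..}. x powr (-3/2) * exp (- 1 / (3 * x))))"
  using part1 part2 part3 by blast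


end
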